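(* Consider any state (the tree held by some replica at some time in some execution) of FugueMax, respectively of Fugue, and let $\prec$ be its list order (the traversal order including tombstones). Then: (a) For any element $D$ in the state, the left origin of $D$ is obtained as follows: starting at $D$, walk up the tree until reaching a node that is a right child of its parent; the parent of that node is $D$'s left origin (the root corresponding to $\mathit{start}$). (b) For elements $A,B$ in the state with $A\prec B$: $B$ is a descendant of $A$ in the FugueMax (respectively Fugue) tree if and only if $B$ is a descendant of $A$ in the left-origin tree.
   Context: Replicated list model: a list is replicated over replicas with unique, totally ordered replica IDs. A replica may invoke $\mathsf{insert}(i,x)$ or $\mathsf{delete}(i)$; operations are applied locally immediately and disseminated by causal broadcast (every message eventually delivered everywhere; a message is delivered only after all messages delivered at its sender before it was sent; the sender delivers its own message immediately). The left origin of an element inserted by $\mathsf{insert}(i,x)$ is the element at index $i-1$ of the inserting replica's visible list at that time, or the symbol $\mathit{start}$ if $i=0$; the left-origin tree is the tree rooted at $\mathit{start}$ in which each element's parent is its left origin. Fugue: each replica's state is a tree with a root; each non-root node has a unique ID, a value (or tombstone $\bot$), a parent, and a side ($L$ or $R$); a node may have several left and several right children. IDs are pairs $(\text{replicaID},\text{counter})$ ordered lexicographically. Traversal of node $v$: traverse its left children in sibling order, visit $v$, traverse its right children in sibling order; in Fugue siblings of the same side are ordered by increasing ID. The traversal including tombstones of the whole tree gives the list order; the visible list consists of the nodes with value $\neq\bot$. $\mathsf{insert}(i,x)$: new ID $(\text{replicaID},\text{counter})$, increment counter; leftOrigin = node of the $(i-1)$-th visible element or the root if $i=0$; rightOrigin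 = node immediately after leftOrigin in the traversal including tombstones (or $\mathit{end}$ if none). If leftOrigin has no right child, the new node is a right child of leftOrigin, otherwise a left child of rightOrigin; the node is broadcast and each replica on delivery inserts it as the given child. $\mathsf{delete}(i)$: broadcast the ID of the $i$-th visible node; on delivery its value is set to $\bot$. FugueMax: identical to Fugue except that each right child also records its rightOrigin, and right-side siblings are ordered in the reverse of the list order of their right origins (sibling with the later right origin first, $\mathit{end}$ counting as later than every node), ties (equal right origins) broken by increasing ID. Left-side siblings are still ordered by increasing ID. *)

theory Defs
  imports Main "HOL-Library.Product_Lexorder"
begin

(* Replica IDs are natural numbers (unique, totally ordered).
   Node IDs are pairs (replicaID, counter), ordered lexicographically. *)
type_synonym rid = nat
type_synonym nid = "nat \<times> nat"

(* Root = the root of the Fugue tree, corresponding to the symbol start *)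
datatype nref = Root | Nd nid
datatype side = L | R
datatype alg = Fugue | FugueMax

(* A tree node.  val = None is the tombstone.  rorig = None means "end".
   rorig is the recorded right origin (only used by FugueMax, for right children).
   lorig is ghost information: the left origin computed by the insert operation
   (the node of the (i-1)-th visible element, or Root for i = 0). *)
record 'v node =
  val :: "'v option"
  parent :: nref
  side :: side
  rorig :: "nid option"
  lorig :: nref

type_synonym 'v tree = "nid \<rightharpoonup> 'v node"

definition pos :: "'a list \<Rightarrow> 'a \<Rightarrow> nat" where
  "pos xs a = length (takeWhile (\<lambda>y. y \<noteq> a) xs)"

(* children of v on side s, in sibling order; xs is the list order of the
   whole tree (needed by FugueMax for right siblings) *)
definition kids :: "alg \<Rightarrow> nid list \<Rightarrow> 'v tree \<Rightarrow> nref \<Rightarrow> side \<Rightarrow> nid list" where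
  "kids a xs T v s =
     (let cs = sorted_list_of_set {n. \<exists>nd. T n = Some nd \<and> parent nd = v \<and> side nd = s} in
      if a = FugueMax \<and> s = R then
        sort_key (\<lambda>n. (case rorig (the (T n)) of
                          None \<Rightarrow> 0
                        | Some m \<Rightarrow> length xs - pos xs m, n)) cs
      else cs)"

fun trav :: "alg \<Rightarrow> nid list \<Rightarrow> 'v tree \<Rightarrow> nat \<Rightarrow> nref \<Rightarrow> nid list" where
  "trav a xs T 0 v = []"
| "trav a xs T (Suc f) v =
     concat (map (\<lambda>c. trav a xs T f (Nd c)) (kids a xs T v L))
     @ (case v of Root \<Rightarrow> [] | Nd n \<Rightarrow> [n])
     @ concat (map (\<lambda>c. trav a xs T f (Nd c)) (kids a xs T v R))"

(* the list order of a state: the traversal of the whole tree.  For FugueMax the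
   sibling order refers to the list order itself, so the list order is the
   (self-consistent) traversal. *)
definition list_order :: "alg \<Rightarrow> 'v tree \<Rightarrow> nid list" where
  "list_order a T = (THE xs. xs = trav a xs T (Suc (card (dom T))) Root)"

definition visible :: "alg \<Rightarrow> 'v tree \<Rightarrow> nid list" where
  "visible a T = filter (\<lambda>n. \<exists>nd. T n = Some nd \<and> val nd \<noteq> None) (list_order a T)"

definition lo_less :: "alg \<Rightarrow> 'v tree \<Rightarrow> nid \<Rightarrow> nid \<Rightarrow> bool" where
  "lo_less a T A B = (\<exists>i j. i < j \<and> j < length (list_order a T)
                        \<and> list_order a T ! i = A \<and> list_order a T ! j = B)"

datatype 'v msg = Ins nid "'v node" | Del nid

fun apply_msg :: "'v msg \<Rightarrow> 'v tree \<Rightarrow> 'v tree" where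
  "apply_msg (Ins n nd) T = T(n \<mapsto> nd)"
| "apply_msg (Del n) T = T(n := map_option (\<lambda>nd. nd\<lparr>val := None\<rparr>) (T n))"

(* global configuration: sent messages (sender, message, causal dependencies =
   the messages delivered at the sender when it was sent; message id = index),
   per-replica delivered message ids, trees and counters *)
record 'v conf =
  sent :: "(rid \<times> 'v msg \<times> nat set) list"
  delivered :: "rid \<Rightarrow> nat set"
  trees :: "rid \<Rightarrow> 'v tree"
  ctr :: "rid \<Rightarrow> nat"

definition init_conf :: "'v conf" where
  "init_conf = \<lparr>sent = [], delivered = (\<lambda>_. {}), trees = (\<lambda>_. Map.empty), ctr = (\<lambda>_. 0)\<rparr>"

definition send :: "rid \<Rightarrow> 'v msg \<Rightarrow> 'v conf \<Rightarrow> 'v conf" where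
  "send r m C = C\<lparr>sent := sent C @ [(r, m, delivered C r)],
                  delivered := (delivered C)(r := insert (length (sent C)) (delivered C r)),
                  trees := (trees C)(r := apply_msg m (trees C r))\<rparr>"

definition ins_node :: "alg \<Rightarrow> rid \<Rightarrow> nat \<Rightarrow> 'v \<Rightarrow> 'v conf \<Rightarrow> 'v node" where
  "ins_node a r i x C =
    (let T = trees C r; xs = list_order a T; vs = visible a T;
         lo = (if i = 0 then Root else Nd (vs ! (i - 1)));
         ro = (case lo of Root \<Rightarrow> (if xs = [] then None else Some (hd xs))
                        | Nd l \<Rightarrow> (if Suc (pos xs l) < length xs then Some (xs ! Suc (pos xs l)) else None));
         hasR = (\<exists>n nd. T n = Some nd \<and> parent nd = lo \<and> side nd = R)
     in if \<not> hasR then \<lparr>val = Some x, parent = lo, side = R, rorig = ro, lorig = lo\<rparr>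
        else \<lparr>val = Some x, parent = Nd (the ro), side = L, rorig = ro, lorig = lo\<rparr>)"

inductive reachable :: "alg \<Rightarrow> 'v conf \<Rightarrow> bool" for a where
  init: "reachable a init_conf"
| insert: "reachable a C \<Longrightarrow> i \<le> length (visible a (trees C r)) \<Longrightarrow>
     reachable a ((send r (Ins (r, ctr C r) (ins_node a r i x C)) C)\<lparr>ctr := (ctr C)(r := Suc (ctr C r))\<rparr>)"
| delete: "reachable a C \<Longrightarrow> i < length (visible a (trees C r)) \<Longrightarrow>
     reachable a (send r (Del (visible a (trees C r) ! i)) C)"
| deliver: "reachable a C \<Longrightarrow> k < length (sent C) \<Longrightarrow> k \<notin> delivered C r \<Longrightarrow>
     snd (snd (sent C ! k)) \<subseteq> delivered C r \<Longrightarrow>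
     reachable a (C\<lparr>delivered := (delivered C)(r := insert k (delivered C r)),
                    trees := (trees C)(r := apply_msg (fst (snd (sent C ! k))) (trees C r))\<rparr>)"

inductive walk_up :: "'v tree \<Rightarrow> nid \<Rightarrow> nref \<Rightarrow> bool" for T where
  right: "T d = Some nd \<Longrightarrow> side nd = R \<Longrightarrow> walk_up T d (parent nd)"
| left: "T d = Some nd \<Longrightarrow> side nd = L \<Longrightarrow> parent nd = Nd p \<Longrightarrow> walk_up T p res \<Longrightarrow> walk_up T d res"

definition tree_edges :: "'v tree \<Rightarrow> (nref \<times> nref) set" where
  "tree_edges T = {(parent nd, Nd n) | n nd. T n = Some nd}"

definition lo_edges :: "'v tree \<Rightarrow> (nref \<times> nref) set" where
  "lo_edges T = {(lorig nd, Nd n) | n nd. T n = Some nd}"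

end

theory Submission
  imports Defs
begin

definition wft :: "'v tree \<Rightarrow> (nid \<Rightarrow> nat) \<Rightarrow> bool" where
 "wft T \<rho> \<longleftrightarrow> finite (dom T) \<and> (\<forall>n nd. T n = Some nd \<longrightarrow>
    (case parent nd of Root \<Rightarrow> side nd = R | Nd p \<Rightarrow> p \<in> dom T \<and> \<rho> p < \<rho> n) \<and>
    (case rorig nd of None \<Rightarrow> True | Some m \<Rightarrow> m \<in> dom T \<and> \<rho> m < \<rho> n))"

lemma edge_iff: "(x, y) \<in> tree_edges T \<longleftrightarrow> (\<exists>n nd. y = Nd n \<and> T n = Some nd \<and> parent nd = x)"
  by (auto simp: tree_edges_def)

lemma lo_edge_iff: "(x, y) \<in> lo_edges T \<longleftrightarrow> (\<exists>n nd. y = Nd n \<and> T n = Some nd \<and> lorig nd = x)"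
  by (auto simp: lo_edges_def)

lemma edge_src_unique: "(x, z) \<in> tree_edges T \<Longrightarrow> (y, z) \<in> tree_edges T \<Longrightarrow> x = y"
  by (auto simp: tree_edges_def)

lemma wft_D: "wft T \<rho> \<Longrightarrow> T n = Some nd \<Longrightarrow>
    (case parent nd of Root \<Rightarrow> side nd = R | Nd p \<Rightarrow> p \<in> dom T \<and> \<rho> p < \<rho> n) \<and>
    (case rorig nd of None \<Rightarrow> True | Some m \<Rightarrow> m \<in> dom T \<and> \<rho> m < \<rho> n)"
  unfolding wft_def by blast

lemma wft_parent: "wft T \<rho> \<Longrightarrow> T n = Some nd \<Longrightarrow> parent nd = Nd p \<Longrightarrow> p \<in> dom T \<and> \<rho> p < \<rho> n"
  using wft_D[of T \<rho> n nd] by simp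

lemma wft_rootR: "wft T \<rho> \<Longrightarrow> T n = Some nd \<Longrightarrow> parent nd = Root \<Longrightarrow> side nd = R"
  using wft_D[of T \<rho> n nd] by simp

lemma wft_rorig: "wft T \<rho> \<Longrightarrow> T n = Some nd \<Longrightarrow> rorig nd = Some m \<Longrightarrow> m \<in> dom T \<and> \<rho> m < \<rho> n"
  using wft_D[of T \<rho> n nd] by simp

lemma wft_finite: "wft T \<rho> \<Longrightarrow> finite (dom T)"
  unfolding wft_def by simp

lemma trancl_rank:
  assumes "wft T \<rho>" "(x, y) \<in> (tree_edges T)\<^sup>+"
  shows "\<exists>m. y = Nd m \<and> m \<in> dom T \<and> (case x of Root \<Rightarrow> True | Nd k \<Rightarrow> k \<in> dom T \<and> \<rho> k < \<rho> m)"
  using assms(2)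
proof (induction rule: trancl_induct)
  case (base y)
  then obtain n nd where "y = Nd n" "T n = Some nd" "parent nd = x" by (auto simp: edge_iff)
  have "(case x of Root \<Rightarrow> True | Nd k \<Rightarrow> k \<in> dom T \<and> \<rho> k < \<rho> n)"
  proof (cases x)
    case (Nd k)
    then show ?thesis using wft_parent[OF assms(1) \<open>T n = Some nd\<close>] \<open>parent nd = x\<close> by simp
  qed simp
  moreover have "n \<in> dom T" using \<open>T n = Some nd\<close> by (simp add: domI)
  ultimately show ?case using \<open>y = Nd n\<close> by simp
next
  case (step y z)
  then obtain n nd where "z = Nd n" "T n = Some nd" "parent nd = y" by (auto simp: edge_iff)
  moreover obtain m where m: "y = Nd m" "m \<in> dom T"
    "(case x of Root \<Rightarrow> True | Nd k \<Rightarrow> k \<in> dom T \<and> \<rho> k < \<rho> m)" using step.IH by blast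
  ultimately have "\<rho> m < \<rho> n" using wft_parent[OF assms(1), of n nd m] by simp
  have "(case x of Root \<Rightarrow> True | Nd k \<Rightarrow> k \<in> dom T \<and> \<rho> k < \<rho> n)"
    using m(3) \<open>\<rho> m < \<rho> n\<close> by (cases x) simp_all
  moreover have "n \<in> dom T" using \<open>T n = Some nd\<close> by (simp add: domI)
  ultimately show ?case using \<open>z = Nd n\<close> by simp
qed

lemma no_cycle: "wft T \<rho> \<Longrightarrow> (x, x) \<notin> (tree_edges T)\<^sup>+"
proof
  assume "wft T \<rho>" "(x, x) \<in> (tree_edges T)\<^sup>+"
  from trancl_rank[OF this] obtain m where "x = Nd m"
    "(case x of Root \<Rightarrow> True | Nd k \<Rightarrow> k \<in> dom T \<and> \<rho> k < \<rho> m)" by blast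
  then show False by simp
qed

lemma root_not_target: "(x, Root) \<notin> (tree_edges T)\<^sup>+"
proof
  assume "(x, Root) \<in> (tree_edges T)\<^sup>+"
  then obtain y where "(y, Root) \<in> tree_edges T" by (blast dest: tranclD2)
  then show False by (simp add: edge_iff)
qed

lemma rtrancl_comparable:
  assumes "(a, m) \<in> (tree_edges T)\<^sup>*"
  shows "(b, m) \<in> (tree_edges T)\<^sup>* \<Longrightarrow> (a, b) \<in> (tree_edges T)\<^sup>* \<or> (b, a) \<in> (tree_edges T)\<^sup>*"
  using assms
proof (induction arbitrary: b rule: rtrancl_induct)
  case base
  then show ?case by simp
next
  case (step y z)
  from step.prems(1) show ?case
  proof (cases rule: rtranclE)
    case base
    then show ?thesis using step by auto
  next
    case (step y')
    with edge_src_unique[OF \<open>(y, z) \<in> _\<close>] have "y' = y" by auto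
    then show ?thesis using step.IH step by auto
  qed
qed

definition subs :: "'v tree \<Rightarrow> nref \<Rightarrow> nid set" where
  "subs T v = {m. (v, Nd m) \<in> (tree_edges T)\<^sup>*}"

definition kset :: "'v tree \<Rightarrow> nref \<Rightarrow> side \<Rightarrow> nid set" where
  "kset T v s = {n. \<exists>nd. T n = Some nd \<and> parent nd = v \<and> side nd = s}"

lemma kset_edge: "c \<in> kset T v s \<Longrightarrow> (v, Nd c) \<in> tree_edges T"
  by (auto simp: kset_def edge_iff)

lemma kset_dom: "kset T v s \<subseteq> dom T"
  by (auto simp: kset_def)

lemma set_kids:
  assumes "finite (dom T)"
  shows "set (kids a xs T v s) = kset T v s \<and> distinct (kids a xs T v s)"
proof -
  have f: "finite (kset T v s)" using assms finite_subset[OF kset_dom] by blast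
  have e: "{n. \<exists>nd. T n = Some nd \<and> parent nd = v \<and> side nd = s} = kset T v s" by (simp add: kset_def)
  show ?thesis unfolding kids_def Let_def e using f by auto
qed

lemma subs_in: "m \<in> subs T v \<Longrightarrow> v = Nd m \<or> m \<in> dom T"
proof -
  assume "m \<in> subs T v"
  then have "(v, Nd m) \<in> (tree_edges T)\<^sup>*" by (simp add: subs_def)
  then show ?thesis
  proof (cases rule: rtranclE)
    case (step y)
    then show ?thesis by (auto simp: edge_iff)
  qed simp
qed

lemma finite_subs: assumes "finite (dom T)" shows "finite (subs T v)"
proof -
  have "subs T v \<subseteq> dom T \<union> {m. v = Nd m}" using subs_in by blast
  moreover have "finite {m. v = Nd m}" by (cases v) auto
  moreover have "finite (dom T \<union> {m. v = Nd m})" using assms \<open>finite {m. v = Nd m}\<close> by simp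
  ultimately show ?thesis using finite_subset by blast
qed

lemma self_subs: "n \<in> subs T (Nd n)" by (simp add: subs_def)

lemma subs_decomp:
  "subs T v = (case v of Root \<Rightarrow> {} | Nd n \<Rightarrow> {n}) \<union> (\<Union>c \<in> kset T v L \<union> kset T v R. subs T (Nd c))"
  (is "_ = ?B \<union> ?U")
proof -
  have 1: "m \<in> subs T v" if "c \<in> kset T v L \<union> kset T v R" "m \<in> subs T (Nd c)" for m c
  proof -
    have "(v, Nd c) \<in> tree_edges T" using that(1) kset_edge by blast
    moreover have "(Nd c, Nd m) \<in> (tree_edges T)\<^sup>*" using that(2) by (simp add: subs_def)
    ultimately show ?thesis unfolding subs_def by (simp add: converse_rtrancl_into_rtrancl)
  qed
  have 2: "m \<in> ?B \<or> (\<exists>c \<in> kset T v L \<union> kset T v R. m \<in> subs T (Nd c))"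
    if "m \<in> subs T v" for m
  proof -
    from that have "(v, Nd m) \<in> (tree_edges T)\<^sup>*" by (simp add: subs_def)
    then show ?thesis
    proof (cases rule: converse_rtranclE)
      case base then show ?thesis by simp
    next
      case (step y)
      then obtain c nd where c: "y = Nd c" "T c = Some nd" "parent nd = v" by (auto simp: edge_iff)
      have "c \<in> kset T v L \<union> kset T v R" using c by (cases "side nd") (auto simp: kset_def)
      moreover have "m \<in> subs T (Nd c)" using step c by (simp add: subs_def)
      ultimately show ?thesis by blast
    qed
  qed
  have 3: "m \<in> subs T v" if "m \<in> ?B" for m
    using that by (cases v) (simp_all add: self_subs)
  show ?thesis
  proof (rule set_eqI, rule iffI)
    fix m assume "m \<in> subs T v"
    from 2[OF this] show "m \<in> ?B \<union> ?U"
    proof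
      assume "m \<in> ?B" then show ?thesis by (rule UnI1)
    next
      assume "\<exists>c \<in> kset T v L \<union> kset T v R. m \<in> subs T (Nd c)"
      then obtain c where "c \<in> kset T v L \<union> kset T v R" "m \<in> subs T (Nd c)" by blast
      then show ?thesis by blast
    qed
  next
    fix m assume "m \<in> ?B \<union> ?U"
    then show "m \<in> subs T v"
    proof
      assume "m \<in> ?B" then show ?thesis by (rule 3)
    next
      assume "m \<in> ?U"
      then obtain c where "c \<in> kset T v L \<union> kset T v R" "m \<in> subs T (Nd c)" by blast
      then show ?thesis by (rule 1)
    qed
  qed
qed

definition need :: "'v tree \<Rightarrow> nref \<Rightarrow> nat" where
  "need T v = (case v of Root \<Rightarrow> Suc (card (subs T Root)) | Nd n \<Rightarrow> card (subs T (Nd n)))"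

lemma need_pos: "finite (dom T) \<Longrightarrow> 0 < need T v"
  by (cases v) (auto simp: need_def card_gt_0_iff finite_subs intro: self_subs)

lemma subs_mono_edge: "(v, Nd c) \<in> tree_edges T \<Longrightarrow> subs T (Nd c) \<subseteq> subs T v"
  unfolding subs_def by (blast intro: converse_rtrancl_into_rtrancl)

lemma self_not_in_kid: "wft T \<rho> \<Longrightarrow> (Nd n, Nd c) \<in> tree_edges T \<Longrightarrow> n \<notin> subs T (Nd c)"
proof
  assume "wft T \<rho>" "(Nd n, Nd c) \<in> tree_edges T" "n \<in> subs T (Nd c)"
  then have "(Nd n, Nd n) \<in> (tree_edges T)\<^sup>+" unfolding subs_def by (auto intro: rtrancl_into_trancl2)
  then show False using no_cycle[OF \<open>wft T \<rho>\<close>] by blast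
qed

lemma need_kid:
  assumes "wft T \<rho>" "c \<in> kset T v s"
  shows "need T (Nd c) < need T v"
proof -
  have e: "(v, Nd c) \<in> tree_edges T" using kset_edge[OF assms(2)] .
  have f: "finite (subs T v)" using finite_subs wft_finite[OF assms(1)] by blast
  show ?thesis
  proof (cases v)
    case Root
    then show ?thesis using subs_mono_edge[OF e] f by (simp add: need_def card_mono le_imp_less_Suc)
  next
    case (Nd n)
    have "subs T (Nd c) \<subset> subs T v"
      using subs_mono_edge[OF e] self_not_in_kid[OF assms(1)] e Nd self_subs by blast
    then show ?thesis using f Nd by (simp add: need_def psubset_card_mono)
  qed
qed

lemma kids_disjoint:
  assumes "wft T \<rho>" "(v, Nd c1) \<in> tree_edges T" "(v, Nd c2) \<in> tree_edges T" "c1 \<noteq> c2"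
  shows "subs T (Nd c1) \<inter> subs T (Nd c2) = {}"
proof (rule ccontr)
  assume "subs T (Nd c1) \<inter> subs T (Nd c2) \<noteq> {}"
  then obtain m where m: "(Nd c1, Nd m) \<in> (tree_edges T)\<^sup>*" "(Nd c2, Nd m) \<in> (tree_edges T)\<^sup>*"
    by (auto simp: subs_def)
  have key: False if "(Nd x1, Nd x2) \<in> (tree_edges T)\<^sup>*" "x1 \<noteq> x2" "(v, Nd x1) \<in> tree_edges T"
      "(v, Nd x2) \<in> tree_edges T" for x1 x2
  proof -
    have "(Nd x1, Nd x2) \<in> (tree_edges T)\<^sup>+" using that(1,2) by (auto simp: rtrancl_eq_or_trancl)
    then obtain y where y: "(Nd x1, y) \<in> (tree_edges T)\<^sup>*" "(y, Nd x2) \<in> tree_edges T"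
      by (blast dest: tranclD2)
    have "y = v" using edge_src_unique[OF y(2) that(4)] .
    with y(1) have "(Nd x1, v) \<in> (tree_edges T)\<^sup>*" by simp
    with that(3) have "(v, v) \<in> (tree_edges T)\<^sup>+" by (rule rtrancl_into_trancl2)
    then show False using no_cycle[OF assms(1)] by blast
  qed
  from rtrancl_comparable[OF m] show False
  proof
    assume "(Nd c1, Nd c2) \<in> (tree_edges T)\<^sup>*"
    then show False using key[of c1 c2] assms(2-4) by blast
  next
    assume "(Nd c2, Nd c1) \<in> (tree_edges T)\<^sup>*"
    then show False using key[of c2 c1] assms(2-4) by blast
  qed
qed


lemma trav_sub: "finite (dom T) \<Longrightarrow> set (trav a xs T f v) \<subseteq> subs T v"
proof (induction f arbitrary: v)
  case 0
  then show ?case by simp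
next
  case (Suc f)
  have k: "set (trav a xs T f (Nd c)) \<subseteq> subs T v" if "c \<in> set (kids a xs T v s)" for c s
  proof -
    have "c \<in> kset T v s" using that set_kids[OF Suc.prems] by blast
    then have "subs T (Nd c) \<subseteq> subs T v" using kset_edge subs_mono_edge by metis
    then show ?thesis using Suc.IH[OF Suc.prems, of "Nd c"] by blast
  qed
  have s: "set (case v of Root \<Rightarrow> [] | Nd n \<Rightarrow> [n]) \<subseteq> subs T v"
    by (cases v) (simp_all add: self_subs)
  show ?case using k s by (simp only: trav.simps set_append set_concat set_map) blast
qed

lemma trav_complete: "wft T \<rho> \<Longrightarrow> need T v \<le> f \<Longrightarrow> set (trav a xs T f v) = subs T v"
proof (induction f arbitrary: v)
  case 0
  then show ?case using need_pos[OF wft_finite[OF 0(1)], of v] by simp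
next
  case (Suc f)
  have fin: "finite (dom T)" using wft_finite[OF Suc.prems(1)] .
  have eq: "(\<Union>c\<in>set (kids a xs T v s). set (trav a xs T f (Nd c))) = (\<Union>c\<in>kset T v s. subs T (Nd c))" for s
  proof -
    have "set (trav a xs T f (Nd c)) = subs T (Nd c)" if "c \<in> kset T v s" for c
      using Suc.IH[OF Suc.prems(1)] need_kid[OF Suc.prems(1) that] Suc.prems(2) by simp
    then show ?thesis using set_kids[OF fin] by simp
  qed
  have s: "set (case v of Root \<Rightarrow> [] | Nd n \<Rightarrow> [n]) = (case v of Root \<Rightarrow> {} | Nd n \<Rightarrow> {n})"
    by (cases v) simp_all
  show ?case unfolding trav.simps set_append set_concat set_map s
    using eq[of L] eq[of R] subs_decomp[of T v] by (simp add: image_image Un_ac)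
qed

lemma distinct_concat_map:
  "distinct cs \<Longrightarrow> (\<forall>c\<in>set cs. distinct (g c)) \<Longrightarrow>
   (\<forall>c1\<in>set cs. \<forall>c2\<in>set cs. c1 \<noteq> c2 \<longrightarrow> set (g c1) \<inter> set (g c2) = {}) \<Longrightarrow>
   distinct (concat (map g cs))"
  by (induction cs) auto

lemma trav_disj:
  assumes "wft T \<rho>" "c1 \<in> kset T v s1" "c2 \<in> kset T v s2" "c1 \<noteq> c2"
  shows "set (trav a xs T f (Nd c1)) \<inter> set (trav a xs' T g (Nd c2)) = {}"
proof -
  have "subs T (Nd c1) \<inter> subs T (Nd c2) = {}"
    using kids_disjoint[OF assms(1) kset_edge[OF assms(2)] kset_edge[OF assms(3)] assms(4)] .
  moreover have "set (trav a xs T f (Nd c1)) \<subseteq> subs T (Nd c1)" using trav_sub wft_finite[OF assms(1)] by metis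
  moreover have "set (trav a xs' T g (Nd c2)) \<subseteq> subs T (Nd c2)" using trav_sub wft_finite[OF assms(1)] by metis
  ultimately show ?thesis by blast
qed

lemma trav_self_notin:
  assumes "wft T \<rho>" "c \<in> kset T (Nd n) s"
  shows "n \<notin> set (trav a xs T f (Nd c))"
  using self_not_in_kid[OF assms(1) kset_edge[OF assms(2)]] trav_sub[OF wft_finite[OF assms(1)]] by blast

lemma kset_side: "c \<in> kset T v s1 \<Longrightarrow> c \<in> kset T v s2 \<Longrightarrow> s1 = s2"
  by (auto simp: kset_def)

lemma trav_distinct: "wft T \<rho> \<Longrightarrow> distinct (trav a xs T f v)"
proof (induction f arbitrary: v)
  case 0
  then show ?case by simp
next
  case (Suc f)
  have fin: "finite (dom T)" using wft_finite[OF Suc.prems(1)] .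
  have d: "distinct (concat (map (\<lambda>c. trav a xs T f (Nd c)) (kids a xs T v s)))" for s
  proof (rule distinct_concat_map)
    show "distinct (kids a xs T v s)" using set_kids[OF fin] by blast
    show "\<forall>c\<in>set (kids a xs T v s). distinct (trav a xs T f (Nd c))" using Suc.IH[OF Suc.prems] by blast
    show "\<forall>c1\<in>set (kids a xs T v s). \<forall>c2\<in>set (kids a xs T v s). c1 \<noteq> c2 \<longrightarrow>
      set (trav a xs T f (Nd c1)) \<inter> set (trav a xs T f (Nd c2)) = {}"
      using trav_disj[OF Suc.prems] set_kids[OF fin] by blast
  qed
  have lr: "set (concat (map (\<lambda>c. trav a xs T f (Nd c)) (kids a xs T v L))) \<inter>
            set (concat (map (\<lambda>c. trav a xs T f (Nd c)) (kids a xs T v R))) = {}"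
  proof -
    have "set (trav a xs T f (Nd c1)) \<inter> set (trav a xs T f (Nd c2)) = {}"
      if "c1 \<in> kset T v L" "c2 \<in> kset T v R" for c1 c2
    proof -
      have "c1 \<noteq> c2" using that kset_side by fastforce
      then show ?thesis using trav_disj[OF Suc.prems that] by blast
    qed
    then show ?thesis using set_kids[OF fin] by (simp add: set_concat) blast
  qed
  have sl: "set (case v of Root \<Rightarrow> [] | Nd n \<Rightarrow> [n]) \<inter>
            set (concat (map (\<lambda>c. trav a xs T f (Nd c)) (kids a xs T v s))) = {}" for s
  proof (cases v)
    case (Nd n)
    then show ?thesis using trav_self_notin[OF Suc.prems, of _ n s] set_kids[OF fin] by auto
  qed simp
  show ?case using d[of L] d[of R] lr sl[of L] sl[of R]
    by (simp only: trav.simps distinct_append) (cases v, auto)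
qed


lemma kids_need: "wft T \<rho> \<Longrightarrow> c \<in> set (kids a xs T v s) \<Longrightarrow> need T (Nd c) < need T v"
  using set_kids[OF wft_finite] need_kid by blast

lemma trav_fuel: "wft T \<rho> \<Longrightarrow> need T v \<le> f \<Longrightarrow> need T v \<le> g \<Longrightarrow> trav a xs T f v = trav a xs T g v"
proof (induction f arbitrary: g v)
  case 0
  then show ?case using need_pos[OF wft_finite[OF 0(1)], of v] by simp
next
  case (Suc f)
  obtain g' where g: "g = Suc g'" using Suc.prems need_pos[OF wft_finite[OF Suc.prems(1)], of v]
    by (cases g) auto
  have m: "map (\<lambda>c. trav a xs T f (Nd c)) (kids a xs T v s) = map (\<lambda>c. trav a xs T g' (Nd c)) (kids a xs T v s)" for s
  proof (rule map_cong[OF refl])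
    fix c assume "c \<in> set (kids a xs T v s)"
    from kids_need[OF Suc.prems(1) this] Suc.prems(2,3) g
    show "trav a xs T f (Nd c) = trav a xs T g' (Nd c)" using Suc.IH[OF Suc.prems(1)] by simp
  qed
  show ?case by (simp only: g trav.simps m)
qed

lemma trav_contig:
  "wft T \<rho> \<Longrightarrow> need T v \<le> f \<Longrightarrow> m \<in> subs T v \<Longrightarrow>
   \<exists>P Q g. need T (Nd m) \<le> g \<and> trav a xs T f v = P @ trav a xs T g (Nd m) @ Q"
proof (induction f arbitrary: v)
  case 0
  then show ?case using need_pos[OF wft_finite[OF 0(1)], of v] by simp
next
  case (Suc f)
  have fin: "finite (dom T)" using wft_finite[OF Suc.prems(1)] .
  show ?case
  proof (cases "v = Nd m")
    case True
    then show ?thesis using Suc.prems(2) by (intro exI[of _ "[]"] exI[of _ "Suc f"]) simp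
  next
    case False
    then obtain c s where cs: "c \<in> kset T v s" "m \<in> subs T (Nd c)" "s = L \<or> s = R"
      using Suc.prems(3) subs_decomp[of T v] by (cases v) auto
    then have cin: "c \<in> set (kids a xs T v s)" using set_kids[OF fin] by blast
    then obtain cs1 cs2 where sp: "kids a xs T v s = cs1 @ c # cs2" by (meson split_list)
    have "need T (Nd c) \<le> f" using need_kid[OF Suc.prems(1) cs(1)] Suc.prems(2) by simp
    from Suc.IH[OF Suc.prems(1) this cs(2)] obtain P Q g where
      PQ: "need T (Nd m) \<le> g" "trav a xs T f (Nd c) = P @ trav a xs T g (Nd m) @ Q" by blast
    define H where "H = (\<lambda>c. trav a xs T f (Nd c))"
    have cc: "concat (map H (kids a xs T v s)) = (concat (map H cs1) @ P) @ trav a xs T g (Nd m) @ (Q @ concat (map H cs2))"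
      using PQ(2) sp by (simp add: H_def)
    from cs(3) show ?thesis
    proof
      assume "s = L"
      then show ?thesis using cc PQ(1) unfolding trav.simps H_def[symmetric]
        by (intro exI[of _ "concat (map H cs1) @ P"] exI[of _ "(Q @ concat (map H cs2)) @ (case v of Root \<Rightarrow> [] | Nd n \<Rightarrow> [n]) @ concat (map H (kids a xs T v R))"] exI[of _ g]) simp
    next
      assume "s = R"
      then show ?thesis using cc PQ(1) unfolding trav.simps H_def[symmetric]
        by (intro exI[of _ "concat (map H (kids a xs T v L)) @ (case v of Root \<Rightarrow> [] | Nd n \<Rightarrow> [n]) @ concat (map H cs1) @ P"] exI[of _ "Q @ concat (map H cs2)"] exI[of _ g]) simp
    qed
  qed
qed

lemma trav_hd_walk:
  "wft T \<rho> \<Longrightarrow> need T (Nd c) \<le> f \<Longrightarrow> walk_up T c res \<Longrightarrow>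
   trav a xs T f (Nd c) \<noteq> [] \<and> walk_up T (hd (trav a xs T f (Nd c))) res"
proof (induction f arbitrary: c)
  case 0
  then show ?case using need_pos[OF wft_finite[OF 0(1)], of "Nd c"] by simp
next
  case (Suc f)
  have fin: "finite (dom T)" using wft_finite[OF Suc.prems(1)] .
  show ?case
  proof (cases "kids a xs T (Nd c) L")
    case Nil
    then show ?thesis using Suc.prems(3) by simp
  next
    case (Cons c1 cs)
    then have "c1 \<in> kset T (Nd c) L" using set_kids[OF fin] by (metis list.set_intros(1))
    then obtain nd1 where nd1: "T c1 = Some nd1" "parent nd1 = Nd c" "side nd1 = L" by (auto simp: kset_def)
    have w: "walk_up T c1 res" using nd1(1) nd1(3) nd1(2) Suc.prems(3) by (rule walk_up.left)
    have "need T (Nd c1) \<le> f" using need_kid[OF Suc.prems(1) \<open>c1 \<in> kset T (Nd c) L\<close>] Suc.prems(2) by simp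
    from Suc.IH[OF Suc.prems(1) this w] Cons show ?thesis by simp
  qed
qed

lemma pos_Cons: "pos (x # xs) a = (if x = a then 0 else Suc (pos xs a))"
  by (simp add: pos_def)

lemma pos_nth: "a \<in> set xs \<Longrightarrow> pos xs a < length xs \<and> xs ! pos xs a = a"
  by (induction xs) (auto simp: pos_Cons)

lemma pos_append: "a \<notin> set U \<Longrightarrow> pos (U @ a # V) a = length U"
  by (induction U) (auto simp: pos_Cons)

lemma pos_filter:
  "a \<in> set xs \<Longrightarrow> b \<in> set xs \<Longrightarrow> P a \<Longrightarrow> P b \<Longrightarrow>
   (pos (filter P xs) a \<le> pos (filter P xs) b) = (pos xs a \<le> pos xs b)"
  by (induction xs) (auto simp: pos_Cons)

lemma insort_key_cong:
  "(\<forall>y\<in>set (x # ys). f x \<le> f y \<longleftrightarrow> g x \<le> g y) \<Longrightarrow> insort_key f x ys = insort_key g x ys"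
  by (induction ys) auto

lemma sort_key_cong_ord:
  "(\<forall>x\<in>set xs. \<forall>y\<in>set xs. f x \<le> f y \<longleftrightarrow> g x \<le> g y) \<Longrightarrow> sort_key f xs = sort_key g xs"
proof (induction xs)
  case Nil
  then show ?case by simp
next
  case (Cons x xs)
  then have "sort_key f xs = sort_key g xs" by simp
  moreover have "insort_key f x (sort_key g xs) = insort_key g x (sort_key g xs)"
    by (rule insort_key_cong) (use Cons.prems in auto)
  ultimately show ?case by simp
qed


lemma sorted_list_of_set_filter':
  assumes "finite A"
  shows "sorted_list_of_set {x \<in> A. P x} = filter P (sorted_list_of_set A)"
proof -
  have "{x \<in> A. P x} = set (filter P (sorted_list_of_set A))" using assms by auto
  moreover have "sorted (filter P (sorted_list_of_set A))"
    using sorted_filter[of "\<lambda>x. x" "sorted_list_of_set A" P] by simp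
  moreover have "distinct (filter P (sorted_list_of_set A))" by simp
  ultimately show ?thesis using sorted_list_of_set.idem_if_sorted_distinct
    by (metis (no_types) subset_UNIV)
qed

definition dclosed :: "'v tree \<Rightarrow> nid set \<Rightarrow> bool" where
  "dclosed T S = (\<forall>n nd p. T n = Some nd \<longrightarrow> n \<in> S \<longrightarrow> parent nd = Nd p \<longrightarrow> p \<in> S)"

lemma kids_restrict:
  assumes "finite (dom T)"
  shows "kids a xs (T |` S) v s = filter (\<lambda>m. m \<in> S) (kids a xs T v s)"
proof -
  have e: "{n. \<exists>nd. (T |` S) n = Some nd \<and> parent nd = v \<and> side nd = s}
         = {n \<in> {n. \<exists>nd. T n = Some nd \<and> parent nd = v \<and> side nd = s}. n \<in> S}"
    by (auto simp: restrict_map_def)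
  have fin: "finite {n. \<exists>nd. T n = Some nd \<and> parent nd = v \<and> side nd = s}"
    using assms by (rule finite_subset[rotated]) auto
  define cs where "cs = sorted_list_of_set {n. \<exists>nd. T n = Some nd \<and> parent nd = v \<and> side nd = s}"
  have e2: "sorted_list_of_set {n. \<exists>nd. (T |` S) n = Some nd \<and> parent nd = v \<and> side nd = s} = filter (\<lambda>m. m \<in> S) cs"
    unfolding e cs_def by (rule sorted_list_of_set_filter'[OF fin])
  show ?thesis
  proof (cases "a = FugueMax \<and> s = R")
    case True
    define k where "k = (\<lambda>n. (case rorig (the (T n)) of None \<Rightarrow> 0 | Some m \<Rightarrow> length xs - pos xs m, n))"
    define kS where "kS = (\<lambda>n. (case rorig (the ((T |` S) n)) of None \<Rightarrow> 0 | Some m \<Rightarrow> length xs - pos xs m, n))"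
    have "sort_key kS (filter (\<lambda>m. m \<in> S) cs) = sort_key k (filter (\<lambda>m. m \<in> S) cs)"
      by (rule sort_key_cong_ord) (auto simp: k_def kS_def)
    then show ?thesis using True unfolding kids_def Let_def e2 cs_def[symmetric]
      by (simp add: filter_sort k_def kS_def)
  next
    case False
    then show ?thesis unfolding kids_def Let_def e2 cs_def[symmetric] by auto
  qed
qed

lemma subs_closed:
  assumes "dclosed T S" "(x, y) \<in> (tree_edges T)\<^sup>*" "y = Nd m" "m \<in> S"
  shows "x = Root \<or> (\<exists>k. x = Nd k \<and> k \<in> S)"
  using assms(2)
proof (induction rule: converse_rtrancl_induct)
  case base
  then show ?case using assms by simp
next
  case (step x x')
  then obtain k' nd where "x' = Nd k'" "T k' = Some nd" "parent nd = x" by (auto simp: edge_iff)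
  moreover have "k' \<in> S" using step.IH calculation by simp
  ultimately show ?case
  proof (cases x)
    case (Nd p)
    then show ?thesis using assms(1) \<open>T k' = Some nd\<close> \<open>parent nd = x\<close> \<open>k' \<in> S\<close>
      unfolding dclosed_def by blast
  qed simp
qed

lemma concat_map_filter:
  "(\<forall>c\<in>set cs. P c \<longrightarrow> h c = g c) \<Longrightarrow> (\<forall>c\<in>set cs. \<not> P c \<longrightarrow> h c = []) \<Longrightarrow>
   concat (map h cs) = concat (map g (filter P cs))"
  by (induction cs) auto

lemma trav_restrict:
  assumes fin: "finite (dom T)" and dc: "dclosed T S"
  shows "(\<forall>n. v = Nd n \<longrightarrow> n \<in> S) \<Longrightarrow>
    filter (\<lambda>m. m \<in> S) (trav a xs T f v) = trav a xs (T |` S) f v"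
proof (induction f arbitrary: v)
  case 0
  then show ?case by simp
next
  case (Suc f)
  have out: "filter (\<lambda>m. m \<in> S) (trav a xs T f (Nd c)) = []" if "c \<notin> S" for c
  proof -
    have "m \<notin> S" if "m \<in> set (trav a xs T f (Nd c))" for m
    proof
      assume "m \<in> S"
      have "m \<in> subs T (Nd c)" using that trav_sub[OF fin] by blast
      then have "(Nd c, Nd m) \<in> (tree_edges T)\<^sup>*" by (simp add: subs_def)
      from subs_closed[OF dc this refl \<open>m \<in> S\<close>] \<open>c \<notin> S\<close> show False by simp
    qed
    then show ?thesis by (simp add: filter_empty_conv)
  qed
  have part: "filter (\<lambda>m. m \<in> S) (concat (map (\<lambda>c. trav a xs T f (Nd c)) (kids a xs T v s)))
     = concat (map (\<lambda>c. trav a xs (T |` S) f (Nd c)) (kids a xs (T |` S) v s))" for s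
    unfolding filter_concat map_map kids_restrict[OF fin]
    by (rule concat_map_filter) (auto simp: Suc.IH out)
  have self: "filter (\<lambda>m. m \<in> S) (case v of Root \<Rightarrow> [] | Nd n \<Rightarrow> [n]) = (case v of Root \<Rightarrow> [] | Nd n \<Rightarrow> [n])"
    using Suc.prems by (cases v) auto
  show ?case by (simp only: trav.simps filter_append part self)
qed

lemma trav_kids_cong:
  "(\<forall>w s. kids a xs1 T w s = kids a xs2 T w s) \<Longrightarrow> trav a xs1 T f v = trav a xs2 T f v"
  by (induction f arbitrary: v) simp_all

lemma prod_key_cong:
  fixes k1 k2 :: "'a::linorder \<Rightarrow> nat"
  assumes "\<forall>x\<in>A. \<forall>y\<in>A. (k1 x \<le> k1 y) = (k2 x \<le> k2 y)" "x \<in> A" "y \<in> A"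
  shows "((k1 x, x) \<le> (k1 y, y)) = ((k2 x, x) \<le> (k2 y, y))"
proof -
  have a: "(k1 x \<le> k1 y) = (k2 x \<le> k2 y)" and b: "(k1 y \<le> k1 x) = (k2 y \<le> k2 x)" using assms by auto
  then have c: "(k1 x < k1 y) = (k2 x < k2 y)" by (simp add: not_le[symmetric])
  show ?thesis using a c by simp
qed

lemma kids_agree:
  assumes fin: "finite (dom T)"
    and rr: "\<forall>n nd m. T n = Some nd \<longrightarrow> side nd = R \<longrightarrow> rorig nd = Some m \<longrightarrow> m \<in> M"
    and M1: "M \<subseteq> set xs1" and M2: "M \<subseteq> set xs2"
    and ord: "\<forall>m1\<in>M. \<forall>m2\<in>M. (pos xs1 m1 \<le> pos xs1 m2) = (pos xs2 m1 \<le> pos xs2 m2)"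
  shows "kids a xs1 T w s = kids a xs2 T w s"
proof (cases "a = FugueMax \<and> s = R")
  case True
  define A where "A = {n. \<exists>nd. T n = Some nd \<and> parent nd = w \<and> side nd = s}"
  have finA: "finite A" unfolding A_def using fin by (rule finite_subset[rotated]) auto
  define k1 where "k1 = (\<lambda>n. case rorig (the (T n)) of None \<Rightarrow> 0 | Some m \<Rightarrow> length xs1 - pos xs1 m)"
  define k2 where "k2 = (\<lambda>n. case rorig (the (T n)) of None \<Rightarrow> 0 | Some m \<Rightarrow> length xs2 - pos xs2 m)"
  have kk: "(k1 x \<le> k1 y) = (k2 x \<le> k2 y)" if xA: "x \<in> A" and yA: "y \<in> A" for x y
  proof -
    have inM: "m \<in> M" if zA: "z \<in> A" and zr: "rorig (the (T z)) = Some m" for z m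
    proof -
      from zA obtain nd where nd: "T z = Some nd" "side nd = s" unfolding A_def by blast
      then have nd2: "side nd = R" using True by simp
      have "rorig nd = Some m" using zr nd by simp
      then show ?thesis using rr nd(1) nd2 by blast
    qed
    have p1: "pos xs1 m < length xs1" "pos xs2 m < length xs2" if "m \<in> M" for m
      using that M1 M2 pos_nth by (metis subsetD)+
    show ?thesis
    proof (cases "rorig (the (T x))")
      case None
      then show ?thesis by (simp add: k1_def k2_def)
    next
      case (Some m1)
      note m1 = inM[OF xA Some]
      show ?thesis
      proof (cases "rorig (the (T y))")
        case None
        then show ?thesis using Some p1[OF m1] by (simp add: k1_def k2_def)
      next
        case (Some m2)
        note m2 = inM[OF yA Some]
        have "(length xs1 - pos xs1 m1 \<le> length xs1 - pos xs1 m2) = (pos xs1 m2 \<le> pos xs1 m1)"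
          using p1[OF m1] p1[OF m2] by arith
        moreover have "(length xs2 - pos xs2 m1 \<le> length xs2 - pos xs2 m2) = (pos xs2 m2 \<le> pos xs2 m1)"
          using p1[OF m1] p1[OF m2] by arith
        ultimately show ?thesis using Some \<open>rorig (the (T x)) = Some m1\<close> ord m1 m2 by (simp add: k1_def k2_def)
      qed
    qed
  qed
  have "sort_key (\<lambda>n. (k1 n, n)) (sorted_list_of_set A) = sort_key (\<lambda>n. (k2 n, n)) (sorted_list_of_set A)"
    by (rule sort_key_cong_ord) (use finA kk prod_key_cong[of A k1 k2] in auto)
  then show ?thesis using True unfolding kids_def Let_def A_def[symmetric] k1_def k2_def by simp
next
  case False
  then show ?thesis unfolding kids_def Let_def by auto
qed


lemma root_reach: "wft T \<rho> \<Longrightarrow> m \<in> dom T \<Longrightarrow> (Root, Nd m) \<in> (tree_edges T)\<^sup>*"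
proof (induction "\<rho> m" arbitrary: m rule: less_induct)
  case less
  then obtain nd where nd: "T m = Some nd" by auto
  then have e: "(parent nd, Nd m) \<in> tree_edges T" by (auto simp: edge_iff)
  show ?case
  proof (cases "parent nd")
    case Root
    then show ?thesis using e by simp
  next
    case (Nd p)
    then have "p \<in> dom T" "\<rho> p < \<rho> m" using wft_parent[OF less.prems(1) nd] by auto
    then have "(Root, Nd p) \<in> (tree_edges T)\<^sup>*" using less by blast
    then show ?thesis using e Nd by simp
  qed
qed

lemma root_subs: "wft T \<rho> \<Longrightarrow> subs T Root = dom T"
proof
  show "subs T Root \<subseteq> dom T" using subs_in by fastforce
  show "wft T \<rho> \<Longrightarrow> dom T \<subseteq> subs T Root"
  proof
    fix m assume "wft T \<rho>" "m \<in> dom T"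
    from root_reach[OF this] show "m \<in> subs T Root" by (simp add: subs_def)
  qed
qed

lemma need_root: "wft T \<rho> \<Longrightarrow> need T Root = Suc (card (dom T))"
  by (simp add: need_def root_subs)

lemma fp_unique:
  assumes w: "wft T \<rho>"
  shows "\<exists>!xs. xs = trav a xs T (Suc (card (dom T))) Root"
proof -
  define N where "N = Suc (card (dom T))"
  define F where "F = (\<lambda>xs. trav a xs T N Root)"
  have fin: "finite (dom T)" using wft_finite[OF w] .
  have setF: "set (F xs) = dom T" for xs
    unfolding F_def using trav_complete[OF w, of Root N] need_root[OF w] root_subs[OF w] N_def by simp
  define S where "S = (\<lambda>n. {m \<in> dom T. \<rho> m < n})"
  have dc: "dclosed T (S n)" for n
    unfolding dclosed_def S_def using wft_parent[OF w] by fastforce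
  have FA: "filter (\<lambda>m. m \<in> S n) (F xs) = trav a xs (T |` S n) N Root" for n xs
    unfolding F_def by (rule trav_restrict[OF fin dc]) simp
  have FB: "trav a xs1 (T |` S (Suc n)) N Root = trav a xs2 (T |` S (Suc n)) N Root"
    if eq: "filter (\<lambda>m. m \<in> S n) xs1 = filter (\<lambda>m. m \<in> S n) xs2"
      and s1: "S n \<subseteq> set xs1" and s2: "S n \<subseteq> set xs2" for n xs1 xs2
  proof (rule trav_kids_cong, intro allI)
    fix wv s
    show "kids a xs1 (T |` S (Suc n)) wv s = kids a xs2 (T |` S (Suc n)) wv s"
    proof (rule kids_agree[where M = "S n"])
      show "finite (dom (T |` S (Suc n)))" using fin by simp
      show "\<forall>k nd m. (T |` S (Suc n)) k = Some nd \<longrightarrow> side nd = R \<longrightarrow> rorig nd = Some m \<longrightarrow> m \<in> S n"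
      proof (intro allI impI)
        fix k nd m
        assume a1: "(T |` S (Suc n)) k = Some nd" and "side nd = R" and a3: "rorig nd = Some m"
        then have k: "k \<in> S (Suc n)" "T k = Some nd" by (auto simp: restrict_map_def split: if_splits)
        then have "m \<in> dom T \<and> \<rho> m < \<rho> k" using wft_rorig[OF w _ a3] by blast
        then show "m \<in> S n" using k(1) by (auto simp: S_def)
      qed
      show "S n \<subseteq> set xs1" by (rule s1)
      show "S n \<subseteq> set xs2" by (rule s2)
      show "\<forall>m1\<in>S n. \<forall>m2\<in>S n. (pos xs1 m1 \<le> pos xs1 m2) = (pos xs2 m1 \<le> pos xs2 m2)"
      proof (intro ballI)
        fix m1 m2 assume m: "m1 \<in> S n" "m2 \<in> S n"
        have "(pos xs1 m1 \<le> pos xs1 m2) = (pos (filter (\<lambda>m. m \<in> S n) xs1) m1 \<le> pos (filter (\<lambda>m. m \<in> S n) xs1) m2)"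
          using pos_filter[of m1 xs1 m2 "\<lambda>m. m \<in> S n"] m s1 by auto
        also have "\<dots> = (pos (filter (\<lambda>m. m \<in> S n) xs2) m1 \<le> pos (filter (\<lambda>m. m \<in> S n) xs2) m2)"
          using eq by simp
        also have "\<dots> = (pos xs2 m1 \<le> pos xs2 m2)"
          using pos_filter[of m1 xs2 m2 "\<lambda>m. m \<in> S n"] m s2 by auto
        finally show "(pos xs1 m1 \<le> pos xs1 m2) = (pos xs2 m1 \<le> pos xs2 m2)" .
      qed
    qed
  qed
  have S0: "S 0 = {}" by (simp add: S_def)
  have Ssub: "S n \<subseteq> dom T" for n by (auto simp: S_def)
  define M0 where "M0 = Suc (Max (insert 0 (\<rho> ` dom T)))"
  have SM0: "S M0 = dom T"
  proof -
    have "\<rho> m < M0" if "m \<in> dom T" for m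
      using that fin unfolding M0_def by (simp add: le_imp_less_Suc)
    then show ?thesis by (auto simp: S_def)
  qed
  have filt_all: "filter (\<lambda>m. m \<in> S M0) xs = xs" if "set xs = dom T" for xs
    using that SM0 by (simp add: filter_id_conv)
  have uniq: "xs1 = xs2" if h1: "xs1 = trav a xs1 T (Suc (card (dom T))) Root"
     and h2: "xs2 = trav a xs2 T (Suc (card (dom T))) Root" for xs1 xs2
  proof -
    from h1 h2 have h1': "xs1 = F xs1" and h2': "xs2 = F xs2" unfolding F_def N_def by simp_all
    have s1: "set xs1 = dom T" using setF h1' by metis
    have s2: "set xs2 = dom T" using setF h2' by metis
    have "filter (\<lambda>m. m \<in> S n) xs1 = filter (\<lambda>m. m \<in> S n) xs2" for n
    proof (induction n)
      case 0
      then show ?case by (simp add: S0)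
    next
      case (Suc n)
      have "filter (\<lambda>m. m \<in> S (Suc n)) xs1 = filter (\<lambda>m. m \<in> S (Suc n)) (F xs1)"
        using arg_cong[OF h1', of "filter (\<lambda>m. m \<in> S (Suc n))"] .
      also have "\<dots> = trav a xs1 (T |` S (Suc n)) N Root" by (rule FA)
      also have "\<dots> = trav a xs2 (T |` S (Suc n)) N Root"
        by (rule FB[OF Suc.IH]) (simp_all add: s1 s2 Ssub)
      also have "\<dots> = filter (\<lambda>m. m \<in> S (Suc n)) (F xs2)" by (rule FA[symmetric])
      also have "\<dots> = filter (\<lambda>m. m \<in> S (Suc n)) xs2"
        using arg_cong[OF h2', of "filter (\<lambda>m. m \<in> S (Suc n))"] by simp
      finally show ?case .
    qed
    then show ?thesis using filt_all s1 s2 by metis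
  qed
  have ex: "\<exists>xs. xs = trav a xs T (Suc (card (dom T))) Root"
  proof -
    define Y where "Y = (\<lambda>k. (F ^^ Suc k) [])"
    have YS: "Y (Suc k) = F (Y k)" for k by (simp add: Y_def)
    have setY: "set (Y k) = dom T" for k by (simp add: Y_def setF)
    have step: "filter (\<lambda>m. m \<in> S n) (Y n) = filter (\<lambda>m. m \<in> S n) (Y (Suc n))" for n
    proof (induction n)
      case 0
      then show ?case by (simp add: S0)
    next
      case (Suc n)
      have "filter (\<lambda>m. m \<in> S (Suc n)) (Y (Suc n)) = trav a (Y n) (T |` S (Suc n)) N Root"
        by (simp only: YS FA)
      also have "\<dots> = trav a (Y (Suc n)) (T |` S (Suc n)) N Root"
        by (rule FB[OF Suc.IH]) (simp_all add: setY Ssub)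
      also have "\<dots> = filter (\<lambda>m. m \<in> S (Suc n)) (Y (Suc (Suc n)))"
        by (simp only: YS FA)
      finally show ?case .
    qed
    have "Y M0 = Y (Suc M0)" using step[of M0] filt_all setY by metis
    then have "Y M0 = trav a (Y M0) T (Suc (card (dom T))) Root"
      using YS[of M0] unfolding F_def N_def by simp
    then show ?thesis by blast
  qed
  show ?thesis using ex uniq by blast
qed

lemma list_order_fp: "wft T \<rho> \<Longrightarrow> list_order a T = trav a (list_order a T) T (Suc (card (dom T))) Root"
  unfolding list_order_def by (rule theI'[OF fp_unique])

lemma list_order_props:
  assumes "wft T \<rho>"
  shows "set (list_order a T) = dom T" "distinct (list_order a T)"
proof -
  have "set (trav a (list_order a T) T (Suc (card (dom T))) Root) = dom T"
    using trav_complete[OF assms, of Root "Suc (card (dom T))"] need_root[OF assms] root_subs[OF assms]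
    by (simp only: le_refl)
  then show "set (list_order a T) = dom T" using list_order_fp[OF assms] by metis
  show "distinct (list_order a T)" using list_order_fp[OF assms] trav_distinct[OF assms] by metis
qed


lemma kids_nonempty: "finite (dom T) \<Longrightarrow> T n = Some nd \<Longrightarrow> parent nd = v \<Longrightarrow> side nd = s \<Longrightarrow>
  \<exists>c cs. kids a xs T v s = c # cs"
proof -
  assume "finite (dom T)" "T n = Some nd" "parent nd = v" "side nd = s"
  then have "n \<in> set (kids a xs T v s)" using set_kids[of T a xs v s] by (auto simp: kset_def)
  then show ?thesis by (cases "kids a xs T v s") auto
qed

lemma kid_in_kset: "finite (dom T) \<Longrightarrow> kids a xs T v s = c # cs \<Longrightarrow> c \<in> kset T v s"
  using set_kids[of T a xs v s] by (metis list.set_intros(1))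

lemma ro_next_Nd:
  assumes w: "wft T \<rho>" and l: "l \<in> dom T"
    and hasR: "T n = Some nd" "parent nd = Nd l" "side nd = R"
  shows "Suc (pos (list_order a T) l) < length (list_order a T) \<and>
         walk_up T (list_order a T ! Suc (pos (list_order a T) l)) (Nd l)"
proof -
  define xs where "xs = list_order a T"
  have fin: "finite (dom T)" using wft_finite[OF w] .
  have xs_eq: "xs = trav a xs T (Suc (card (dom T))) Root" using list_order_fp[OF w] xs_def by simp
  have "l \<in> subs T Root" using root_subs[OF w] l by simp
  from trav_contig[OF w _ this, of "Suc (card (dom T))" a xs] need_root[OF w] xs_eq
  obtain P Q g where PQ: "need T (Nd l) \<le> g" "xs = P @ trav a xs T g (Nd l) @ Q" by auto
  obtain g' where g: "g = Suc g'" using PQ(1) need_pos[OF fin, of "Nd l"] by (cases g) auto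
  obtain c cs where kc: "kids a xs T (Nd l) R = c # cs" using kids_nonempty[OF fin hasR] by blast
  have ck: "c \<in> kset T (Nd l) R" using kid_in_kset[OF fin kc] .
  then obtain ndc where ndc: "T c = Some ndc" "parent ndc = Nd l" "side ndc = R" by (auto simp: kset_def)
  have "walk_up T c (parent ndc)" using ndc(1,3) by (rule walk_up.right)
  then have wc: "walk_up T c (Nd l)" using ndc(2) by simp
  have "need T (Nd c) \<le> g'" using need_kid[OF w ck] PQ(1) g by simp
  from trav_hd_walk[OF w this wc, of a xs]
  have hw: "trav a xs T g' (Nd c) \<noteq> []" "walk_up T (hd (trav a xs T g' (Nd c))) (Nd l)" by auto
  define U where "U = P @ concat (map (\<lambda>c. trav a xs T g' (Nd c)) (kids a xs T (Nd l) L))"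
  define V where "V = trav a xs T g' (Nd c) @ concat (map (\<lambda>c. trav a xs T g' (Nd c)) cs) @ Q"
  have xsUV: "xs = U @ l # V" unfolding U_def V_def using PQ(2) g kc by simp
  have "distinct (U @ l # V)" using list_order_props(2)[OF w, of a] xsUV xs_def by simp
  then have "l \<notin> set U" by simp
  then have p: "pos xs l = length U" using xsUV pos_append by metis
  have eq1: "(U @ l # V) ! Suc (length U) = hd (trav a xs T g' (Nd c))"
    unfolding V_def using hw(1) by (simp add: nth_append hd_conv_nth)
  have "xs ! Suc (pos xs l) = xs ! Suc (length U)" using p by simp
  also have "\<dots> = (U @ l # V) ! Suc (length U)"
    by (rule arg_cong[where f="\<lambda>z. z ! Suc (length U)", OF xsUV])
  finally have "xs ! Suc (pos xs l) = hd (trav a xs T g' (Nd c))" using eq1 by simp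
  moreover have "Suc (pos xs l) < length xs"
  proof -
    have "length xs = length (U @ l # V)" by (rule arg_cong[where f=length, OF xsUV])
    then show ?thesis using p hw(1) unfolding V_def by simp
  qed
  ultimately show ?thesis using hw(2) xs_def by simp
qed

lemma ro_next_Root:
  assumes w: "wft T \<rho>"
    and hasR: "T n = Some nd" "parent nd = Root" "side nd = R"
  shows "list_order a T \<noteq> [] \<and> walk_up T (hd (list_order a T)) Root"
proof -
  define xs where "xs = list_order a T"
  have fin: "finite (dom T)" using wft_finite[OF w] .
  have xs_eq: "xs = trav a xs T (Suc (card (dom T))) Root" using list_order_fp[OF w] xs_def by simp
  have kL: "kids a xs T Root L = []"
  proof -
    have "kset T Root L = {}" using wft_rootR[OF w] by (auto simp: kset_def)
    then show ?thesis using set_kids[OF fin, of a xs Root L] by simp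
  qed
  obtain c cs where kc: "kids a xs T Root R = c # cs" using kids_nonempty[OF fin hasR] by blast
  have ck: "c \<in> kset T Root R" using kid_in_kset[OF fin kc] .
  then obtain ndc where ndc: "T c = Some ndc" "parent ndc = Root" "side ndc = R" by (auto simp: kset_def)
  have "walk_up T c (parent ndc)" using ndc(1,3) by (rule walk_up.right)
  then have wc: "walk_up T c Root" using ndc(2) by simp
  have "need T (Nd c) \<le> card (dom T)" using need_kid[OF w ck] need_root[OF w] by simp
  from trav_hd_walk[OF w this wc, of a xs]
  have hw: "trav a xs T (card (dom T)) (Nd c) \<noteq> []" "walk_up T (hd (trav a xs T (card (dom T)) (Nd c))) Root" by auto
  have "xs = trav a xs T (card (dom T)) (Nd c) @ concat (map (\<lambda>c. trav a xs T (card (dom T)) (Nd c)) cs)"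
    using xs_eq kL kc by simp
  then show ?thesis using hw xs_def by (metis Nil_is_append_conv hd_append2)
qed

lemma walk_up_edge: "walk_up T d res \<Longrightarrow> (res, Nd d) \<in> (tree_edges T)\<^sup>+"
proof (induction rule: walk_up.induct)
  case (right d nd)
  then show ?case by (auto simp: edge_iff)
next
  case (left d nd p res)
  then have "(Nd p, Nd d) \<in> tree_edges T" by (auto simp: edge_iff)
  with left.IH show ?case by (rule trancl_into_trancl)
qed

lemma sub_parent:
  assumes "(Nd c, Nd d) \<in> (tree_edges T)\<^sup>*" "c \<noteq> d" "T d = Some nd"
  shows "\<exists>p. parent nd = Nd p \<and> p \<in> subs T (Nd c)"
  using assms(1)
proof (cases rule: rtranclE)
  case base
  then show ?thesis using assms(2) by simp
next
  case (step y)
  then have y: "y = parent nd" using assms(3) by (auto simp: edge_iff)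
  show ?thesis
  proof (cases y)
    case Root
    from step(1) show ?thesis unfolding Root
    proof (cases rule: rtranclE)
      case (step z)
      then show ?thesis by (auto simp: edge_iff)
    qed simp
  next
    case (Nd p)
    then show ?thesis using y step(1) by (simp add: subs_def)
  qed
qed

lemma walk_up_rsub:
  assumes w: "wft T \<rho>"
  shows "walk_up T d res \<Longrightarrow> T c = Some ndc \<Longrightarrow> side ndc = R \<Longrightarrow> parent ndc = Nd A \<Longrightarrow> d \<in> subs T (Nd c) \<Longrightarrow>
    res = Nd A \<or> (\<exists>X. res = Nd X \<and> X \<in> subs T (Nd c) \<and> \<rho> X < \<rho> d)"
proof (induction rule: walk_up.induct)
  case (right d nd)
  show ?case
  proof (cases "c = d")
    case True
    then show ?thesis using right.hyps right.prems by simp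
  next
    case False
    have "(Nd c, Nd d) \<in> (tree_edges T)\<^sup>*" using right.prems(4) by (simp add: subs_def)
    from sub_parent[of c d T nd, OF this False right.hyps(1)] obtain p where p: "parent nd = Nd p" "p \<in> subs T (Nd c)"
      by blast
    then have "\<rho> p < \<rho> d" using wft_parent[OF w right.hyps(1)] by simp
    then show ?thesis using p by simp
  qed
next
  case (left d nd p res)
  have "c \<noteq> d" using left.hyps left.prems by auto
  moreover have "(Nd c, Nd d) \<in> (tree_edges T)\<^sup>*" using left.prems(4) by (simp add: subs_def)
  ultimately obtain p' where "parent nd = Nd p'" "p' \<in> subs T (Nd c)"
    using sub_parent[of c d T nd] left.hyps(1) by blast
  then have "p \<in> subs T (Nd c)" using left.hyps(3) by simp
  from left.IH[OF left.prems(1-3) this] have "res = Nd A \<or> (\<exists>X. res = Nd X \<and> X \<in> subs T (Nd c) \<and> \<rho> X < \<rho> p)" .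
  moreover have "\<rho> p < \<rho> d" using wft_parent[OF w left.hyps(1) left.hyps(3)] by simp
  ultimately show ?case by auto
qed

lemma lo_reach:
  assumes w: "wft T \<rho>" and wa: "\<forall>D nd. T D = Some nd \<longrightarrow> walk_up T D (lorig nd)"
    and c: "T c = Some ndc" "side ndc = R" "parent ndc = Nd A"
  shows "B \<in> subs T (Nd c) \<Longrightarrow> (Nd A, Nd B) \<in> (lo_edges T)\<^sup>+"
proof (induction "\<rho> B" arbitrary: B rule: less_induct)
  case less
  have "B \<in> dom T" using subs_in[OF less.prems] c(1) by auto
  then obtain ndB where ndB: "T B = Some ndB" by auto
  have wB: "walk_up T B (lorig ndB)" using wa ndB by blast
  have e: "(lorig ndB, Nd B) \<in> lo_edges T" using ndB by (auto simp: lo_edge_iff)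
  from walk_up_rsub[OF w wB c less.prems]
  show ?case
  proof
    assume "lorig ndB = Nd A"
    then show ?thesis using e by auto
  next
    assume "\<exists>X. lorig ndB = Nd X \<and> X \<in> subs T (Nd c) \<and> \<rho> X < \<rho> B"
    then obtain X where X: "lorig ndB = Nd X" "X \<in> subs T (Nd c)" "\<rho> X < \<rho> B" by blast
    from less.hyps[OF X(3) X(2)] have "(Nd A, Nd X) \<in> (lo_edges T)\<^sup>+" .
    then show ?thesis using e X(1) by (metis trancl_into_trancl)
  qed
qed

lemma lo_sub_tree:
  assumes wa: "\<forall>D nd. T D = Some nd \<longrightarrow> walk_up T D (lorig nd)"
  shows "(x, y) \<in> (lo_edges T)\<^sup>+ \<Longrightarrow> (x, y) \<in> (tree_edges T)\<^sup>+"
proof (induction rule: trancl_induct)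
  case (base y)
  then obtain n nd where "y = Nd n" "T n = Some nd" "x = lorig nd" by (auto simp: lo_edge_iff)
  then show ?case using wa walk_up_edge by metis
next
  case (step y z)
  then obtain n nd where "z = Nd n" "T n = Some nd" "y = lorig nd" by (auto simp: lo_edge_iff)
  then have "(y, z) \<in> (tree_edges T)\<^sup>+" using wa walk_up_edge by metis
  with step.IH show ?case by (rule trancl_trans)
qed

lemma left_before:
  assumes w: "wft T \<rho>" and c: "T c = Some ndc" "side ndc = L" "parent ndc = Nd A"
    and B: "B \<in> subs T (Nd c)"
  shows "\<exists>U V. list_order a T = U @ A # V \<and> B \<in> set U"
proof -
  define xs where "xs = list_order a T"
  have fin: "finite (dom T)" using wft_finite[OF w] .
  have xs_eq: "xs = trav a xs T (Suc (card (dom T))) Root" using list_order_fp[OF w] xs_def by simp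
  have A: "A \<in> dom T" using wft_parent[OF w c(1) c(3)] by simp
  have "A \<in> subs T Root" using root_subs[OF w] A by simp
  from trav_contig[OF w _ this, of "Suc (card (dom T))" a xs] need_root[OF w] xs_eq
  obtain P Q g where PQ: "need T (Nd A) \<le> g" "xs = P @ trav a xs T g (Nd A) @ Q" by auto
  obtain g' where g: "g = Suc g'" using PQ(1) need_pos[OF fin, of "Nd A"] by (cases g) auto
  have ck: "c \<in> kset T (Nd A) L" using c by (auto simp: kset_def)
  then have "c \<in> set (kids a xs T (Nd A) L)" using set_kids[OF fin] by blast
  moreover have "set (trav a xs T g' (Nd c)) = subs T (Nd c)"
    using trav_complete[OF w] need_kid[OF w ck] PQ(1) g by simp
  ultimately have "B \<in> set (concat (map (\<lambda>c. trav a xs T g' (Nd c)) (kids a xs T (Nd A) L)))"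
    using B by auto
  moreover have "xs = (P @ concat (map (\<lambda>c. trav a xs T g' (Nd c)) (kids a xs T (Nd A) L))) @ A #
     (concat (map (\<lambda>c. trav a xs T g' (Nd c)) (kids a xs T (Nd A) R)) @ Q)"
    using PQ(2) g by simp
  ultimately show ?thesis unfolding xs_def by (metis Un_iff set_append)
qed

lemma order_contra:
  assumes d: "distinct (U @ A # V)" and ij: "i < j" "j < length (U @ A # V)"
    and a: "(U @ A # V) ! i = A" and b: "(U @ A # V) ! j = B" and B: "B \<in> set U"
  shows False
proof -
  have A: "(U @ A # V) ! length U = A" by simp
  have il: "i < length (U @ A # V)" using ij by simp
  have ul: "length U < length (U @ A # V)" by simp
  have i: "i = length U" using nth_eq_iff_index_eq[OF d il ul] a A by simp
  obtain k where k: "k < length U" "U ! k = B" using B by (auto simp: in_set_conv_nth)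
  then have kb: "(U @ A # V) ! k = B" by (simp add: nth_append)
  have kl: "k < length (U @ A # V)" using k by simp
  have "k = j" using nth_eq_iff_index_eq[OF d kl ij(2)] kb b by simp
  then show False using k i ij by simp
qed


lemma visible_dom: "n \<in> set (visible a T) \<Longrightarrow> n \<in> dom T"
  by (auto simp: visible_def)

lemma ins_node_good:
  fixes C :: "'v conf" and x :: 'v and a :: alg and r :: rid and i :: nat
  assumes w: "wft (trees C r) \<rho>" and i: "i \<le> length (visible a (trees C r))"
  defines "nd \<equiv> ins_node a r i x C" and "T \<equiv> trees C r"
  shows "(parent nd = Root \<or> (\<exists>p. parent nd = Nd p \<and> p \<in> dom T)) \<and> (parent nd = Root \<longrightarrow> side nd = R)
    \<and> (\<forall>m. rorig nd = Some m \<longrightarrow> m \<in> dom T) \<and> (side nd = R \<longrightarrow> lorig nd = parent nd)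
    \<and> (side nd = L \<longrightarrow> (\<exists>p. parent nd = Nd p \<and> walk_up T p (lorig nd)))"
proof -
  have wT: "wft T \<rho>" using w by (simp add: T_def)
  define xs where "xs = list_order a T"
  define vs where "vs = visible a T"
  define lo where "lo = (if i = 0 then Root else Nd (vs ! (i - 1)))"
  define ro where "ro = (case lo of Root \<Rightarrow> (if xs = [] then None else Some (hd xs))
                        | Nd l \<Rightarrow> (if Suc (pos xs l) < length xs then Some (xs ! Suc (pos xs l)) else None))"
  define hasR where "hasR = (\<exists>n nd. T n = Some nd \<and> parent nd = lo \<and> side nd = R)"
  have nd_eq: "nd = (if \<not> hasR then \<lparr>val = Some x, parent = lo, side = R, rorig = ro, lorig = lo\<rparr>
        else \<lparr>val = Some x, parent = Nd (the ro), side = L, rorig = ro, lorig = lo\<rparr>)"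
    unfolding nd_def ins_node_def Let_def T_def[symmetric] xs_def[symmetric] vs_def[symmetric]
      lo_def[symmetric] ro_def[symmetric] hasR_def[symmetric] by simp
  have setxs: "set xs = dom T" using list_order_props(1)[OF wT] xs_def by simp
  have lo_ok: "lo = Root \<or> (\<exists>l. lo = Nd l \<and> l \<in> dom T)"
  proof (cases "i = 0")
    case False
    then have "vs ! (i - 1) \<in> set vs" using i vs_def T_def by simp
    then have "vs ! (i - 1) \<in> dom T" using visible_dom vs_def by metis
    then show ?thesis using False lo_def by simp
  qed (simp add: lo_def)
  have roxs: "m \<in> set xs" if rm: "ro = Some m" for m
  proof (cases lo)
    case Root
    then have "xs \<noteq> [] \<and> m = hd xs" using rm unfolding ro_def by (simp split: if_splits)
    then show ?thesis using hd_in_set by metis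
  next
    case (Nd l)
    then have "Suc (pos xs l) < length xs \<and> m = xs ! Suc (pos xs l)" using rm unfolding ro_def by (simp split: if_splits)
    then show ?thesis using nth_mem by metis
  qed
  have ro_ok: "\<forall>m. ro = Some m \<longrightarrow> m \<in> dom T" using roxs setxs by blast
  show ?thesis
  proof (cases hasR)
    case False
    then show ?thesis using nd_eq lo_ok ro_ok by auto
  next
    case True
    then obtain n0 nd0 where h: "T n0 = Some nd0" "parent nd0 = lo" "side nd0 = R" unfolding hasR_def by blast
    have "\<exists>hh. ro = Some hh \<and> walk_up T hh lo"
    proof (cases lo)
      case Root
      from ro_next_Root[OF wT h(1) _ h(3), of a] h(2) Root
      show ?thesis unfolding ro_def xs_def by simp
    next
      case (Nd l)
      then have "l \<in> dom T" using lo_ok by simp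
      from ro_next_Nd[OF wT this h(1) _ h(3), of a] h(2) Nd
      show ?thesis unfolding ro_def xs_def by simp
    qed
    then obtain hh where "ro = Some hh" "walk_up T hh lo" by blast
    moreover have "hh \<in> dom T" using calculation ro_ok by blast
    ultimately show ?thesis using nd_eq True ro_ok by auto
  qed
qed

definition strip :: "'v node \<Rightarrow> 'v node" where "strip nd = nd\<lparr>val := None\<rparr>"

lemma strip_eq: "strip nd = strip nd' \<Longrightarrow> parent nd = parent nd' \<and> side nd = side nd' \<and> rorig nd = rorig nd' \<and> lorig nd = lorig nd'"
  unfolding strip_def by (metis node.select_convs node.surjective node.update_convs(1))

definition consistent :: "'v conf \<Rightarrow> 'v tree \<Rightarrow> bool" where
  "consistent C T = (\<forall>m nd0. T m = Some nd0 \<longrightarrow>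
     (\<exists>j < length (sent C). \<exists>nd'. fst (snd (sent C ! j)) = Ins m nd' \<and> strip nd0 = strip nd'))"

definition good :: "'v conf \<Rightarrow> nat \<Rightarrow> 'v node \<Rightarrow> bool" where
  "good C k nd = (
     (\<forall>p. parent nd = Nd p \<longrightarrow> (\<exists>j \<in> snd (snd (sent C ! k)). j < length (sent C) \<and> (\<exists>nd'. fst (snd (sent C ! j)) = Ins p nd'))) \<and>
     (\<forall>m. rorig nd = Some m \<longrightarrow> (\<exists>j \<in> snd (snd (sent C ! k)). j < length (sent C) \<and> (\<exists>nd'. fst (snd (sent C ! j)) = Ins m nd'))) \<and>
     (parent nd = Root \<longrightarrow> side nd = R) \<and>
     (side nd = R \<longrightarrow> lorig nd = parent nd) \<and>
     (side nd = L \<longrightarrow> (\<exists>p T0. parent nd = Nd p \<and> walk_up T0 p (lorig nd) \<and> consistent C T0)))"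

definition rinv :: "'v conf \<Rightarrow> bool" where
  "rinv C \<longleftrightarrow>
    (\<forall>r. delivered C r \<subseteq> {..<length (sent C)}) \<and>
    (\<forall>k k' n nd nd'. k < length (sent C) \<longrightarrow> k' < length (sent C) \<longrightarrow>
        fst (snd (sent C ! k)) = Ins n nd \<longrightarrow> fst (snd (sent C ! k')) = Ins n nd' \<longrightarrow> k = k') \<and>
    (\<forall>k s c nd. k < length (sent C) \<longrightarrow> fst (snd (sent C ! k)) = Ins (s, c) nd \<longrightarrow> c < ctr C s) \<and>
    (\<forall>r n nd. trees C r n = Some nd \<longrightarrow>
        (\<exists>k \<in> delivered C r. \<exists>nd0. fst (snd (sent C ! k)) = Ins n nd0 \<and> strip nd = strip nd0)) \<and>
    (\<forall>r k n nd. k \<in> delivered C r \<longrightarrow> fst (snd (sent C ! k)) = Ins n nd \<longrightarrow> n \<in> dom (trees C r)) \<and>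
    (\<forall>k n nd. k < length (sent C) \<longrightarrow> fst (snd (sent C ! k)) = Ins n nd \<longrightarrow> good C k nd) \<and>
    (\<forall>r. \<exists>\<rho>. wft (trees C r) \<rho>)"

lemma inv_G1: "rinv C \<Longrightarrow> \<forall>r. delivered C r \<subseteq> {..<length (sent C)}"
  unfolding rinv_def by (elim conjE) assumption

lemma inv_G2: "rinv C \<Longrightarrow> \<forall>k k' n nd nd'. k < length (sent C) \<longrightarrow> k' < length (sent C) \<longrightarrow>
        fst (snd (sent C ! k)) = Ins n nd \<longrightarrow> fst (snd (sent C ! k')) = Ins n nd' \<longrightarrow> k = k'"
  unfolding rinv_def by (elim conjE) assumption

lemma inv_G3: "rinv C \<Longrightarrow> \<forall>k s c nd. k < length (sent C) \<longrightarrow> fst (snd (sent C ! k)) = Ins (s, c) nd \<longrightarrow> c < ctr C s"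
  unfolding rinv_def by (elim conjE) assumption

lemma inv_G4: "rinv C \<Longrightarrow> \<forall>r n nd. trees C r n = Some nd \<longrightarrow>
        (\<exists>k \<in> delivered C r. \<exists>nd0. fst (snd (sent C ! k)) = Ins n nd0 \<and> strip nd = strip nd0)"
  unfolding rinv_def by (elim conjE) assumption

lemma inv_G5: "rinv C \<Longrightarrow> \<forall>r k n nd. k \<in> delivered C r \<longrightarrow> fst (snd (sent C ! k)) = Ins n nd \<longrightarrow> n \<in> dom (trees C r)"
  unfolding rinv_def by (elim conjE) assumption

lemma inv_G6: "rinv C \<Longrightarrow> \<forall>k n nd. k < length (sent C) \<longrightarrow> fst (snd (sent C ! k)) = Ins n nd \<longrightarrow> good C k nd"
  unfolding rinv_def by (elim conjE) assumption

lemma inv_W: "rinv C \<Longrightarrow> \<forall>r. \<exists>\<rho>. wft (trees C r) \<rho>"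
  unfolding rinv_def by (elim conjE) assumption

lemma walk_up_transfer:
  assumes "walk_up T0 d res"
  shows "d \<in> dom T \<Longrightarrow> (\<forall>m nd0 nd. T0 m = Some nd0 \<longrightarrow> T m = Some nd \<longrightarrow> parent nd = parent nd0 \<and> side nd = side nd0)
    \<Longrightarrow> (\<forall>m nd p. T m = Some nd \<longrightarrow> parent nd = Nd p \<longrightarrow> p \<in> dom T) \<Longrightarrow> walk_up T d res"
  using assms
proof (induction rule: walk_up.induct)
  case (right d nd)
  from right.prems(1) obtain nd' where nd': "T d = Some nd'" by auto
  have "parent nd' = parent nd \<and> side nd' = side nd" using right.prems(2)[rule_format, OF right.hyps(1) nd'] .
  then have "parent nd' = parent nd" "side nd' = side nd" by auto
  then show ?case using walk_up.right[of T d nd'] nd' right.hyps by simp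
next
  case (left d nd p res)
  from left.prems(1) obtain nd' where nd': "T d = Some nd'" by auto
  have "parent nd' = parent nd \<and> side nd' = side nd" using left.prems(2)[rule_format, OF left.hyps(1) nd'] .
  then have e: "parent nd' = Nd p" "side nd' = L" using left.hyps by auto
  then have "p \<in> dom T" using left.prems(3) nd' by blast
  then have "walk_up T p res" using left.IH left.prems(2,3) by blast
  then show ?case using walk_up.left[of T d nd' p res] nd' e by simp
qed

lemma inv_walk:
  assumes rinv: "rinv C" and D: "trees C r D = Some nd"
  shows "walk_up (trees C r) D (lorig nd)"
proof -
  define T where "T = trees C r"
  have G1: "\<forall>r. delivered C r \<subseteq> {..<length (sent C)}" using inv_G1[OF rinv] .
  have G2: "\<forall>k k' n nd nd'. k < length (sent C) \<longrightarrow> k' < length (sent C) \<longrightarrow>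
        fst (snd (sent C ! k)) = Ins n nd \<longrightarrow> fst (snd (sent C ! k')) = Ins n nd' \<longrightarrow> k = k'"
    using inv_G2[OF rinv] .
  have G4: "\<forall>n nd. T n = Some nd \<longrightarrow> (\<exists>k \<in> delivered C r. \<exists>nd0. fst (snd (sent C ! k)) = Ins n nd0 \<and> strip nd = strip nd0)"
    using inv_G4[OF rinv] unfolding T_def by blast
  have G6: "\<forall>k n nd. k < length (sent C) \<longrightarrow> fst (snd (sent C ! k)) = Ins n nd \<longrightarrow> good C k nd"
    using inv_G6[OF rinv] .
  obtain \<rho> where w: "wft T \<rho>" using inv_W[OF rinv] unfolding T_def by blast
  from G4 D obtain k nd0 where k: "k \<in> delivered C r" "fst (snd (sent C ! k)) = Ins D nd0" "strip nd = strip nd0"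
    unfolding T_def by blast
  have kl: "k < length (sent C)" using G1 k(1) by blast
  have g: "good C k nd0" using G6 kl k(2) by blast
  have s: "parent nd = parent nd0" "side nd = side nd0" "lorig nd = lorig nd0" using strip_eq[OF k(3)] by auto
  have DT: "T D = Some nd" using D T_def by simp
  show ?thesis
  proof (cases "side nd0")
    case R
    then have "lorig nd = parent nd" using g s unfolding good_def by simp
    then show ?thesis using walk_up.right[of T D nd] DT R s unfolding T_def by simp
  next
    case L
    then obtain p T0 where pT: "parent nd0 = Nd p" "walk_up T0 p (lorig nd0)" "consistent C T0"
      using g unfolding good_def by auto
    have pd: "p \<in> dom T" using wft_parent[OF w DT] pT(1) s by simp
    have agree: "\<forall>m nd0 nd. T0 m = Some nd0 \<longrightarrow> T m = Some nd \<longrightarrow> parent nd = parent nd0 \<and> side nd = side nd0"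
    proof (intro allI impI)
      fix m na nb assume a: "T0 m = Some na" "T m = Some nb"
      from pT(3) a(1) obtain j nj where j: "j < length (sent C)" "fst (snd (sent C ! j)) = Ins m nj" "strip na = strip nj"
        unfolding consistent_def by blast
      from G4 a(2) obtain k' nk where k': "k' \<in> delivered C r" "fst (snd (sent C ! k')) = Ins m nk" "strip nb = strip nk"
        by blast
      have "k' < length (sent C)" using G1 k'(1) by blast
      then have "j = k'" using G2 j k' by blast
      then have "strip na = strip nb" using j k' by simp
      then show "parent nb = parent na \<and> side nb = side na" using strip_eq by metis
    qed
    have cl: "\<forall>m nd p. T m = Some nd \<longrightarrow> parent nd = Nd p \<longrightarrow> p \<in> dom T"
      using wft_parent[OF w] by blast
    have "walk_up T p (lorig nd0)" using walk_up_transfer[OF pT(2) pd agree cl] .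
    then show ?thesis using walk_up.left[of T D nd p "lorig nd"] DT L s pT(1) unfolding T_def by simp
  qed
qed


lemma inv_intro:
  assumes "\<forall>r. delivered C r \<subseteq> {..<length (sent C)}"
    "\<forall>k k' n nd nd'. k < length (sent C) \<longrightarrow> k' < length (sent C) \<longrightarrow>
        fst (snd (sent C ! k)) = Ins n nd \<longrightarrow> fst (snd (sent C ! k')) = Ins n nd' \<longrightarrow> k = k'"
    "\<forall>k s c nd. k < length (sent C) \<longrightarrow> fst (snd (sent C ! k)) = Ins (s, c) nd \<longrightarrow> c < ctr C s"
    "\<forall>r n nd. trees C r n = Some nd \<longrightarrow>
        (\<exists>k \<in> delivered C r. \<exists>nd0. fst (snd (sent C ! k)) = Ins n nd0 \<and> strip nd = strip nd0)"
    "\<forall>r k n nd. k \<in> delivered C r \<longrightarrow> fst (snd (sent C ! k)) = Ins n nd \<longrightarrow> n \<in> dom (trees C r)"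
    "\<forall>k n nd. k < length (sent C) \<longrightarrow> fst (snd (sent C ! k)) = Ins n nd \<longrightarrow> good C k nd"
    "\<forall>r. \<exists>\<rho>. wft (trees C r) \<rho>"
  shows "rinv C"
  unfolding rinv_def using assms by (intro conjI)

lemma wft_cong:
  assumes "wft T \<rho>" "dom T' = dom T"
    "\<forall>n nd'. T' n = Some nd' \<longrightarrow> (\<exists>nd. T n = Some nd \<and> parent nd' = parent nd \<and> side nd' = side nd \<and> rorig nd' = rorig nd)"
  shows "wft T' \<rho>"
  unfolding wft_def
proof (rule conjI[OF _ allI[OF allI[OF impI]]])
  show "finite (dom T')" using assms(2) wft_finite[OF assms(1)] by simp
next
  fix n nd' assume a: "T' n = Some nd'"
  then obtain nd where nd: "T n = Some nd" "parent nd' = parent nd" "side nd' = side nd" "rorig nd' = rorig nd"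
    using assms(3) by blast
  from wft_D[OF assms(1) nd(1)]
  show "(case parent nd' of Root \<Rightarrow> side nd' = R | Nd p \<Rightarrow> p \<in> dom T' \<and> \<rho> p < \<rho> n) \<and>
       (case rorig nd' of None \<Rightarrow> True | Some m \<Rightarrow> m \<in> dom T' \<and> \<rho> m < \<rho> n)"
    unfolding nd(2-4) assms(2) .
qed

lemma wft_insert:
  assumes w: "wft T \<rho>" and n: "n \<notin> dom T" and r1: "parent nd = Root \<longrightarrow> side nd = R"
    and r2: "\<forall>p. parent nd = Nd p \<longrightarrow> p \<in> dom T" and r3: "\<forall>m. rorig nd = Some m \<longrightarrow> m \<in> dom T"
  shows "wft (T(n \<mapsto> nd)) (\<rho>(n := Suc (Max (insert 0 (\<rho> ` dom T)))))"
proof -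
  define M where "M = Suc (Max (insert 0 (\<rho> ` dom T)))"
  have fin: "finite (dom T)" using wft_finite[OF w] .
  have lt: "\<rho> m < M" if "m \<in> dom T" for m using that fin unfolding M_def by (simp add: le_imp_less_Suc)
  have ne: "m \<noteq> n" if "m \<in> dom T" for m using that n by blast
  show ?thesis unfolding wft_def M_def[symmetric]
  proof (rule conjI[OF _ allI[OF allI[OF impI]]])
    show "finite (dom (T(n \<mapsto> nd)))" using fin by simp
  next
    fix k ndk assume a: "(T(n \<mapsto> nd)) k = Some ndk"
    show "(case parent ndk of Root \<Rightarrow> side ndk = R | Nd p \<Rightarrow> p \<in> dom (T(n \<mapsto> nd)) \<and> (\<rho>(n := M)) p < (\<rho>(n := M)) k) \<and>
       (case rorig ndk of None \<Rightarrow> True | Some m \<Rightarrow> m \<in> dom (T(n \<mapsto> nd)) \<and> (\<rho>(n := M)) m < (\<rho>(n := M)) k)"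
    proof (cases "k = n")
      case True
      then have ndk: "ndk = nd" using a by simp
      have p1: "(case parent nd of Root \<Rightarrow> side nd = R | Nd p \<Rightarrow> p \<in> dom (T(n \<mapsto> nd)) \<and> (\<rho>(n := M)) p < (\<rho>(n := M)) n)"
      proof (cases "parent nd")
        case Root then show ?thesis using r1 by simp
      next
        case (Nd p)
        then have "p \<in> dom T" using r2 by simp
        then show ?thesis using Nd lt ne by simp
      qed
      have p2: "(case rorig nd of None \<Rightarrow> True | Some m \<Rightarrow> m \<in> dom (T(n \<mapsto> nd)) \<and> (\<rho>(n := M)) m < (\<rho>(n := M)) n)"
      proof (cases "rorig nd")
        case None then show ?thesis by simp
      next
        case (Some m)
        then have "m \<in> dom T" using r3 by simp
        then show ?thesis using Some lt ne by simp
      qed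
      show ?thesis unfolding ndk True using p1 p2 by (rule conjI)
    next
      case False
      then have Tk: "T k = Some ndk" using a by simp
      then have kd: "k \<in> dom T" by (simp add: domI)
      have p1: "(case parent ndk of Root \<Rightarrow> side ndk = R | Nd p \<Rightarrow> p \<in> dom (T(n \<mapsto> nd)) \<and> (\<rho>(n := M)) p < (\<rho>(n := M)) k)"
      proof (cases "parent ndk")
        case Root then show ?thesis using wft_rootR[OF w Tk] by simp
      next
        case (Nd p)
        then have "p \<in> dom T" "\<rho> p < \<rho> k" using wft_parent[OF w Tk] by auto
        then show ?thesis using Nd ne[OF kd] ne[of p] by simp
      qed
      have p2: "(case rorig ndk of None \<Rightarrow> True | Some m \<Rightarrow> m \<in> dom (T(n \<mapsto> nd)) \<and> (\<rho>(n := M)) m < (\<rho>(n := M)) k)"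
      proof (cases "rorig ndk")
        case None then show ?thesis by simp
      next
        case (Some m)
        then have "m \<in> dom T" "\<rho> m < \<rho> k" using wft_rorig[OF w Tk] by auto
        then show ?thesis using Some ne[OF kd] ne[of m] by simp
      qed
      show ?thesis using p1 p2 by (rule conjI)
    qed
  qed
qed

lemma strip_upd: "strip (nd\<lparr>val := v\<rparr>) = strip nd"
  by (simp add: strip_def)

lemma del_some:
  "(T(m := map_option (\<lambda>nd. nd\<lparr>val := None\<rparr>) (T m))) n = Some nd' \<Longrightarrow> \<exists>nd. T n = Some nd \<and> strip nd' = strip nd"
  by (cases "n = m") (auto simp: strip_upd)

lemma del_dom: "dom (T(m := map_option (\<lambda>nd. nd\<lparr>val := None\<rparr>) (T m))) = dom T"
  by auto

lemma del_wft:
  assumes "wft T \<rho>" shows "wft (T(m := map_option (\<lambda>nd. nd\<lparr>val := None\<rparr>) (T m))) \<rho>"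
proof (rule wft_cong[OF assms del_dom], intro allI impI)
  fix n nd' assume "(T(m := map_option (\<lambda>nd. nd\<lparr>val := None\<rparr>) (T m))) n = Some nd'"
  from del_some[OF this] obtain nd where nd: "T n = Some nd" "strip nd' = strip nd" by blast
  have "parent nd' = parent nd \<and> side nd' = side nd \<and> rorig nd' = rorig nd" using strip_eq[OF nd(2)] by simp
  then show "\<exists>nd. T n = Some nd \<and> parent nd' = parent nd \<and> side nd' = side nd \<and> rorig nd' = rorig nd"
    using nd(1) by blast
qed

lemma nth_snoc_lt: "k < length xs \<Longrightarrow> (xs @ [y]) ! k = xs ! k"
  by (simp add: nth_append)

lemma consistent_mono: "consistent C T \<Longrightarrow> sent C' = sent C @ ys \<Longrightarrow> consistent C' T"
  unfolding consistent_def
proof (intro allI impI)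
  fix m nd0
  assume c: "\<forall>m nd0. T m = Some nd0 \<longrightarrow> (\<exists>j<length (sent C). \<exists>nd'. fst (snd (sent C ! j)) = Ins m nd' \<and> strip nd0 = strip nd')"
    and s: "sent C' = sent C @ ys" and t: "T m = Some nd0"
  from c t obtain j nd' where j: "j < length (sent C)" "fst (snd (sent C ! j)) = Ins m nd'" "strip nd0 = strip nd'" by blast
  then have "j < length (sent C')" "sent C' ! j = sent C ! j" using s by (auto simp: nth_append)
  then show "\<exists>j<length (sent C'). \<exists>nd'. fst (snd (sent C' ! j)) = Ins m nd' \<and> strip nd0 = strip nd'"
    using j by metis
qed

lemma good_mono: "good C k nd \<Longrightarrow> k < length (sent C) \<Longrightarrow> sent C' = sent C @ ys \<Longrightarrow> good C' k nd"
proof -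
  assume g: "good C k nd" and k: "k < length (sent C)" and s: "sent C' = sent C @ ys"
  have sk: "sent C' ! k = sent C ! k" using k s by (simp add: nth_append)
  have sj: "j < length (sent C) \<Longrightarrow> j < length (sent C') \<and> sent C' ! j = sent C ! j" for j
    using s by (simp add: nth_append)
  have ex: "(\<exists>j \<in> snd (snd (sent C ! k)). j < length (sent C) \<and> (\<exists>nd'. fst (snd (sent C ! j)) = Ins p nd')) \<Longrightarrow>
            (\<exists>j \<in> snd (snd (sent C' ! k)). j < length (sent C') \<and> (\<exists>nd'. fst (snd (sent C' ! j)) = Ins p nd'))" for p
    using sk sj by metis
  have cons: "consistent C T0 \<Longrightarrow> consistent C' T0" for T0 using consistent_mono s by blast
  show "good C' k nd" using g ex cons unfolding good_def by blast
qed


lemma inv_node_msg: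
  assumes "rinv C" "trees C r p = Some ndp"
  shows "\<exists>j \<in> delivered C r. j < length (sent C) \<and> (\<exists>nd'. fst (snd (sent C ! j)) = Ins p nd' \<and> strip ndp = strip nd')"
proof -
  from inv_G4[OF assms(1)] assms(2) obtain k nd0 where
    k: "k \<in> delivered C r" "fst (snd (sent C ! k)) = Ins p nd0" "strip ndp = strip nd0" by blast
  have "k < length (sent C)" using inv_G1[OF assms(1)] k(1) by blast
  then show ?thesis using k by blast
qed

lemma inv_consistent: "rinv C \<Longrightarrow> consistent C (trees C r)"
  unfolding consistent_def using inv_node_msg by blast

lemma inv_insert:
  fixes C :: "'v conf" and x :: 'v
  assumes rinv: "rinv C" and i: "i \<le> length (visible a (trees C r))"
  shows "rinv ((send r (Ins (r, ctr C r) (ins_node a r i x C)) C)\<lparr>ctr := (ctr C)(r := Suc (ctr C r))\<rparr>)"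
proof -
  define n where "n = (r, ctr C r)"
  define nd where "nd = ins_node a r i x C"
  define T where "T = trees C r"
  define Ln where "Ln = length (sent C)"
  define C' where "C' = (send r (Ins n nd) C)\<lparr>ctr := (ctr C)(r := Suc (ctr C r))\<rparr>"
  have sC: "sent C' = sent C @ [(r, Ins n nd, delivered C r)]" by (simp add: C'_def send_def)
  have dC: "delivered C' = (delivered C)(r := insert Ln (delivered C r))" by (simp add: C'_def send_def Ln_def)
  have tC: "trees C' = (trees C)(r := T(n \<mapsto> nd))" by (simp add: C'_def send_def T_def)
  have cC: "ctr C' = (ctr C)(r := Suc (ctr C r))" by (simp add: C'_def)
  have lenC: "length (sent C') = Suc Ln" using sC Ln_def by simp
  have nthC: "sent C' ! k = sent C ! k" if "k < Ln" for k using sC Ln_def that by (simp add: nth_append)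
  have nthL: "sent C' ! Ln = (r, Ins n nd, delivered C r)" using sC Ln_def by simp
  note G1 = inv_G1[OF rinv] and G2 = inv_G2[OF rinv] and G3 = inv_G3[OF rinv] and G4 = inv_G4[OF rinv]
    and G5 = inv_G5[OF rinv] and G6 = inv_G6[OF rinv]
  have dL: "k < Ln" if "k \<in> delivered C r'" for k r' using G1 that Ln_def by blast
  obtain \<rho> where w: "wft T \<rho>" using inv_W[OF rinv] T_def by blast
  have gd: "(parent nd = Root \<or> (\<exists>p. parent nd = Nd p \<and> p \<in> dom T)) \<and> (parent nd = Root \<longrightarrow> side nd = R)
    \<and> (\<forall>m. rorig nd = Some m \<longrightarrow> m \<in> dom T) \<and> (side nd = R \<longrightarrow> lorig nd = parent nd)
    \<and> (side nd = L \<longrightarrow> (\<exists>p. parent nd = Nd p \<and> walk_up T p (lorig nd)))"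
    using ins_node_good[of C r \<rho> i a x] w i unfolding nd_def T_def by blast
  have old_ids: False if "k < Ln" "fst (snd (sent C ! k)) = Ins n nd'" for k nd'
  proof -
    have "ctr C r < ctr C r" using G3 that Ln_def unfolding n_def by blast
    then show False by simp
  qed
  have n_new: "n \<notin> dom T"
  proof
    assume "n \<in> dom T"
    then obtain ndx where "trees C r n = Some ndx" using T_def by auto
    from inv_node_msg[OF rinv this] obtain j nd' where "j < Ln" "fst (snd (sent C ! j)) = Ins n nd'"
      using Ln_def by blast
    then show False using old_ids by blast
  qed
  have msg_in_dom: "\<exists>j \<in> delivered C r. j < Suc Ln \<and> (\<exists>nd'. fst (snd (sent C' ! j)) = Ins p nd')"
    if "p \<in> dom T" for p
  proof -
    from that obtain ndp where "trees C r p = Some ndp" using T_def by auto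
    from inv_node_msg[OF rinv this] obtain j nd' where "j \<in> delivered C r" "j < Ln" "fst (snd (sent C ! j)) = Ins p nd'"
      using Ln_def by blast
    then show ?thesis using nthC by (metis less_SucI)
  qed
  have consT: "consistent C' T"
    using consistent_mono[OF inv_consistent[OF rinv] sC] T_def by simp
  show ?thesis unfolding n_def[symmetric] nd_def[symmetric] C'_def[symmetric]
  proof (rule inv_intro)
    show "\<forall>r. delivered C' r \<subseteq> {..<length (sent C')}"
    proof
      fix r'
      show "delivered C' r' \<subseteq> {..<length (sent C')}"
        using dL unfolding dC lenC by (cases "r' = r") (auto simp: less_SucI)
    qed
  next
    show "\<forall>k k' n nd nd'. k < length (sent C') \<longrightarrow> k' < length (sent C') \<longrightarrow>
        fst (snd (sent C' ! k)) = Ins n nd \<longrightarrow> fst (snd (sent C' ! k')) = Ins n nd' \<longrightarrow> k = k'"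
    proof (intro allI impI)
      fix k k' m nd1 nd2
      assume k: "k < length (sent C')" "k' < length (sent C')"
        and m: "fst (snd (sent C' ! k)) = Ins m nd1" "fst (snd (sent C' ! k')) = Ins m nd2"
      show "k = k'"
      proof (cases "k < Ln")
        case True
        show ?thesis
        proof (cases "k' < Ln")
          case True
          then show ?thesis using \<open>k < Ln\<close> m nthC G2 Ln_def by metis
        next
          case False
          then have "k' = Ln" using k lenC by simp
          then have "m = n" using m nthL by simp
          then show ?thesis using old_ids[OF \<open>k < Ln\<close>] m(1) nthC[OF \<open>k < Ln\<close>] by simp
        qed
      next
        case False
        then have kL: "k = Ln" using k lenC by simp
        then have "m = n" using m nthL by simp
        show ?thesis
        proof (cases "k' < Ln")
          case True
          then show ?thesis using old_ids[OF True] m(2) nthC[OF True] \<open>m = n\<close> by simp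
        next
          case False
          then show ?thesis using kL k lenC by simp
        qed
      qed
    qed
  next
    show "\<forall>k s c nd. k < length (sent C') \<longrightarrow> fst (snd (sent C' ! k)) = Ins (s, c) nd \<longrightarrow> c < ctr C' s"
    proof (intro allI impI)
      fix k s c nd1
      assume k: "k < length (sent C')" and m: "fst (snd (sent C' ! k)) = Ins (s, c) nd1"
      show "c < ctr C' s"
      proof (cases "k < Ln")
        case True
        then have "c < ctr C s" using G3 m nthC Ln_def by metis
        then show ?thesis unfolding cC by (cases "s = r") simp_all
      next
        case False
        then have "k = Ln" using k lenC by simp
        then have "(s, c) = n" using m nthL by simp
        then show ?thesis unfolding cC n_def by simp
      qed
    qed
  next
    show "\<forall>r n nd. trees C' r n = Some nd \<longrightarrow>
        (\<exists>k \<in> delivered C' r. \<exists>nd0. fst (snd (sent C' ! k)) = Ins n nd0 \<and> strip nd = strip nd0)"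
    proof (intro allI impI)
      fix r' m nd1 assume t: "trees C' r' m = Some nd1"
      show "\<exists>k \<in> delivered C' r'. \<exists>nd0. fst (snd (sent C' ! k)) = Ins m nd0 \<and> strip nd1 = strip nd0"
      proof (cases "r' = r \<and> m = n")
        case True
        then have "nd1 = nd" using t tC by simp
        moreover have "Ln \<in> delivered C' r'" using True dC by simp
        moreover have "fst (snd (sent C' ! Ln)) = Ins m nd" using nthL True by simp
        ultimately show ?thesis by blast
      next
        case False
        then have "trees C r' m = Some nd1" using t tC T_def by (auto split: if_splits)
        from inv_node_msg[OF rinv this] obtain j nd' where
          j: "j \<in> delivered C r'" "j < Ln" "fst (snd (sent C ! j)) = Ins m nd'" "strip nd1 = strip nd'"
          using Ln_def by blast
        have "j \<in> delivered C' r'" using j(1) dC by (cases "r' = r") simp_all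
        then show ?thesis using j nthC by metis
      qed
    qed
  next
    show "\<forall>r k n nd. k \<in> delivered C' r \<longrightarrow> fst (snd (sent C' ! k)) = Ins n nd \<longrightarrow> n \<in> dom (trees C' r)"
    proof (intro allI impI)
      fix r' k m nd1 assume k: "k \<in> delivered C' r'" and m: "fst (snd (sent C' ! k)) = Ins m nd1"
      show "m \<in> dom (trees C' r')"
      proof (cases "r' = r \<and> k = Ln")
        case True
        then have "m = n" using m nthL by simp
        then show ?thesis using True tC by simp
      next
        case False
        then have kd: "k \<in> delivered C r'" using k dC by (auto split: if_splits)
        then have "k < Ln" using dL by blast
        then have "fst (snd (sent C ! k)) = Ins m nd1" using m nthC by simp
        then have "m \<in> dom (trees C r')" using G5 kd by blast
        then show ?thesis using tC T_def by auto
      qed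
    qed
  next
    show "\<forall>k n nd. k < length (sent C') \<longrightarrow> fst (snd (sent C' ! k)) = Ins n nd \<longrightarrow> good C' k nd"
    proof (intro allI impI)
      fix k m nd1 assume k: "k < length (sent C')" and m: "fst (snd (sent C' ! k)) = Ins m nd1"
      show "good C' k nd1"
      proof (cases "k < Ln")
        case True
        then have "good C k nd1" using G6 m nthC Ln_def by metis
        then show ?thesis using good_mono sC True Ln_def by metis
      next
        case False
        then have kL: "k = Ln" using k lenC by simp
        then have nd1: "nd1 = nd" using m nthL by simp
        have deps: "snd (snd (sent C' ! k)) = delivered C r" using kL nthL by simp
        show ?thesis unfolding good_def deps nd1 lenC
        proof (intro conjI allI impI)
          fix p assume "parent nd = Nd p"
          then have "p \<in> dom T" using gd by auto
          then show "\<exists>j\<in>delivered C r. j < Suc Ln \<and> (\<exists>nd'. fst (snd (sent C' ! j)) = Ins p nd')"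
            by (rule msg_in_dom)
        next
          fix m assume "rorig nd = Some m"
          then have "m \<in> dom T" using gd by auto
          then show "\<exists>j\<in>delivered C r. j < Suc Ln \<and> (\<exists>nd'. fst (snd (sent C' ! j)) = Ins m nd')"
            by (rule msg_in_dom)
        next
          show "parent nd = Root \<Longrightarrow> side nd = R" using gd by auto
        next
          show "side nd = R \<Longrightarrow> lorig nd = parent nd" using gd by auto
        next
          assume "side nd = L"
          then obtain p where "parent nd = Nd p" "walk_up T p (lorig nd)" using gd by auto
          then show "\<exists>p T0. parent nd = Nd p \<and> walk_up T0 p (lorig nd) \<and> consistent C' T0"
            using consT by blast
        qed
      qed
    qed
  next
    show "\<forall>r. \<exists>\<rho>. wft (trees C' r) \<rho>"
    proof
      fix r'
      show "\<exists>\<rho>. wft (trees C' r') \<rho>"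
      proof (cases "r' = r")
        case True
        have "parent nd = Root \<longrightarrow> side nd = R" "\<forall>p. parent nd = Nd p \<longrightarrow> p \<in> dom T"
             "\<forall>m. rorig nd = Some m \<longrightarrow> m \<in> dom T" using gd by auto
        from wft_insert[OF w n_new this] show ?thesis using True tC by auto
      next
        case False
        then show ?thesis using inv_W[OF rinv] tC by simp
      qed
    qed
  qed
qed


lemma inv_delete:
  fixes C :: "'v conf"
  assumes rinv: "rinv C"
  shows "rinv (send r (Del m) C)"
proof -
  define T where "T = trees C r"
  define Ln where "Ln = length (sent C)"
  define C' where "C' = send r (Del m) C"
  have sC: "sent C' = sent C @ [(r, Del m, delivered C r)]" by (simp add: C'_def send_def)
  have dC: "delivered C' = (delivered C)(r := insert Ln (delivered C r))" by (simp add: C'_def send_def Ln_def)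
  have tC: "trees C' = (trees C)(r := T(m := map_option (\<lambda>nd. nd\<lparr>val := None\<rparr>) (T m)))" by (simp add: C'_def send_def T_def)
  have cC: "ctr C' = ctr C" by (simp add: C'_def send_def)
  have lenC: "length (sent C') = Suc Ln" using sC Ln_def by simp
  have nthC: "sent C' ! k = sent C ! k" if "k < Ln" for k using sC Ln_def that by (simp add: nth_append)
  have nthL: "fst (snd (sent C' ! Ln)) = Del m" using sC Ln_def by simp
  note G1 = inv_G1[OF rinv] and G2 = inv_G2[OF rinv] and G3 = inv_G3[OF rinv] and G4 = inv_G4[OF rinv]
    and G5 = inv_G5[OF rinv] and G6 = inv_G6[OF rinv]
  have dL: "k < Ln" if "k \<in> delivered C r'" for k r' using G1 that Ln_def by blast
  have insk: "k < Ln" if "k < length (sent C')" "fst (snd (sent C' ! k)) = Ins n nd" for k n nd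
  proof (rule ccontr)
    assume "\<not> k < Ln"
    then have "k = Ln" using that lenC by simp
    then show False using that nthL by simp
  qed
  show ?thesis unfolding C'_def[symmetric]
  proof (rule inv_intro)
    show "\<forall>r. delivered C' r \<subseteq> {..<length (sent C')}"
    proof
      fix r'
      show "delivered C' r' \<subseteq> {..<length (sent C')}"
        using dL unfolding dC lenC by (cases "r' = r") (auto simp: less_SucI)
    qed
  next
    show "\<forall>k k' n nd nd'. k < length (sent C') \<longrightarrow> k' < length (sent C') \<longrightarrow>
        fst (snd (sent C' ! k)) = Ins n nd \<longrightarrow> fst (snd (sent C' ! k')) = Ins n nd' \<longrightarrow> k = k'"
    proof (intro allI impI)
      fix k k' n nd1 nd2
      assume k: "k < length (sent C')" "k' < length (sent C')"
        and m: "fst (snd (sent C' ! k)) = Ins n nd1" "fst (snd (sent C' ! k')) = Ins n nd2"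
      have "k < Ln" "k' < Ln" using insk k m by blast+
      then show "k = k'" using m nthC G2 Ln_def by metis
    qed
  next
    show "\<forall>k s c nd. k < length (sent C') \<longrightarrow> fst (snd (sent C' ! k)) = Ins (s, c) nd \<longrightarrow> c < ctr C' s"
    proof (intro allI impI)
      fix k s c nd1
      assume k: "k < length (sent C')" and m: "fst (snd (sent C' ! k)) = Ins (s, c) nd1"
      have "k < Ln" using insk k m by blast
      then show "c < ctr C' s" using G3 m nthC Ln_def cC by metis
    qed
  next
    show "\<forall>r n nd. trees C' r n = Some nd \<longrightarrow>
        (\<exists>k \<in> delivered C' r. \<exists>nd0. fst (snd (sent C' ! k)) = Ins n nd0 \<and> strip nd = strip nd0)"
    proof (intro allI impI)
      fix r' n nd1 assume t: "trees C' r' n = Some nd1"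
      obtain nd2 where nd2: "trees C r' n = Some nd2" "strip nd1 = strip nd2"
      proof (cases "r' = r")
        case True
        then show ?thesis using that t tC del_some[of T m n nd1] T_def by auto
      next
        case False
        then show ?thesis using that t tC by auto
      qed
      from inv_node_msg[OF rinv nd2(1)] obtain j nd' where
        j: "j \<in> delivered C r'" "j < Ln" "fst (snd (sent C ! j)) = Ins n nd'" "strip nd2 = strip nd'"
        using Ln_def by blast
      have "j \<in> delivered C' r'" using j(1) dC by (cases "r' = r") simp_all
      then show "\<exists>k \<in> delivered C' r'. \<exists>nd0. fst (snd (sent C' ! k)) = Ins n nd0 \<and> strip nd1 = strip nd0"
        using j nthC nd2(2) by metis
    qed
  next
    show "\<forall>r k n nd. k \<in> delivered C' r \<longrightarrow> fst (snd (sent C' ! k)) = Ins n nd \<longrightarrow> n \<in> dom (trees C' r)"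
    proof (intro allI impI)
      fix r' k n nd1 assume k: "k \<in> delivered C' r'" and m: "fst (snd (sent C' ! k)) = Ins n nd1"
      have "k < length (sent C')" using k dC dL lenC by (cases "r' = r") (auto simp: less_SucI)
      then have kl: "k < Ln" using insk m by blast
      then have kd: "k \<in> delivered C r'" using k dC by (cases "r' = r") auto
      have "fst (snd (sent C ! k)) = Ins n nd1" using m nthC kl by simp
      then have "n \<in> dom (trees C r')" using G5 kd by blast
      then show "n \<in> dom (trees C' r')" using tC T_def del_dom by (cases "r' = r") auto
    qed
  next
    show "\<forall>k n nd. k < length (sent C') \<longrightarrow> fst (snd (sent C' ! k)) = Ins n nd \<longrightarrow> good C' k nd"
    proof (intro allI impI)
      fix k n nd1 assume k: "k < length (sent C')" and m: "fst (snd (sent C' ! k)) = Ins n nd1"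
      have kl: "k < Ln" using insk k m by blast
      then have "good C k nd1" using G6 m nthC Ln_def by metis
      then show "good C' k nd1" using good_mono sC kl Ln_def by metis
    qed
  next
    show "\<forall>r. \<exists>\<rho>. wft (trees C' r) \<rho>"
    proof
      fix r'
      obtain \<rho> where w: "wft (trees C r') \<rho>" using inv_W[OF rinv] by blast
      show "\<exists>\<rho>. wft (trees C' r') \<rho>"
      proof (cases "r' = r")
        case True
        then have "wft (trees C' r') \<rho>" using del_wft[of T \<rho> m] w tC T_def by simp
        then show ?thesis by blast
      next
        case False
        then show ?thesis using w tC by auto
      qed
    qed
  qed
qed


lemma inv_deliver:
  fixes C :: "'v conf"
  assumes rinv: "rinv C" and kl: "k < length (sent C)" and kn: "k \<notin> delivered C r"
    and deps: "snd (snd (sent C ! k)) \<subseteq> delivered C r"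
  shows "rinv (C\<lparr>delivered := (delivered C)(r := insert k (delivered C r)),
                    trees := (trees C)(r := apply_msg (fst (snd (sent C ! k))) (trees C r))\<rparr>)"
proof -
  define T where "T = trees C r"
  define C' where "C' = C\<lparr>delivered := (delivered C)(r := insert k (delivered C r)),
                    trees := (trees C)(r := apply_msg (fst (snd (sent C ! k))) (trees C r))\<rparr>"
  have sC: "sent C' = sent C" by (simp add: C'_def)
  have dC: "delivered C' = (delivered C)(r := insert k (delivered C r))" by (simp add: C'_def)
  have tC: "trees C' = (trees C)(r := apply_msg (fst (snd (sent C ! k))) T)" by (simp add: C'_def T_def)
  have cC: "ctr C' = ctr C" by (simp add: C'_def)
  note G1 = inv_G1[OF rinv] and G2 = inv_G2[OF rinv] and G3 = inv_G3[OF rinv] and G4 = inv_G4[OF rinv]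
    and G5 = inv_G5[OF rinv] and G6 = inv_G6[OF rinv]
  have dL: "j < length (sent C)" if "j \<in> delivered C r'" for j r' using G1 that by blast
  have dC_old: "j \<in> delivered C' r'" if "j \<in> delivered C r'" for j r' using that dC by (cases "r' = r") auto
  have dC_new: "j \<in> delivered C r' \<or> (r' = r \<and> j = k)" if "j \<in> delivered C' r'" for j r'
    using that dC by (cases "r' = r") auto
  obtain \<rho> where w: "wft T \<rho>" using inv_W[OF rinv] T_def by blast
  have trees_cases: "(\<exists>n nd. fst (snd (sent C ! k)) = Ins n nd \<and> trees C' r = T(n \<mapsto> nd))
     \<or> (\<exists>m. fst (snd (sent C ! k)) = Del m \<and> trees C' r = T(m := map_option (\<lambda>nd. nd\<lparr>val := None\<rparr>) (T m)))"
    using tC by (cases "fst (snd (sent C ! k))") auto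
  have G4': "\<forall>r n nd. trees C' r n = Some nd \<longrightarrow>
        (\<exists>k \<in> delivered C' r. \<exists>nd0. fst (snd (sent C' ! k)) = Ins n nd0 \<and> strip nd = strip nd0)"
  proof (intro allI impI)
    fix r' n nd1 assume t: "trees C' r' n = Some nd1"
    have old: "\<exists>k \<in> delivered C' r'. \<exists>nd0. fst (snd (sent C' ! k)) = Ins n nd0 \<and> strip nd1 = strip nd0"
      if "trees C r' n = Some nd2" "strip nd1 = strip nd2" for nd2
    proof -
      from inv_node_msg[OF rinv that(1)] obtain j nd' where
        j: "j \<in> delivered C r'" "fst (snd (sent C ! j)) = Ins n nd'" "strip nd2 = strip nd'" by blast
      then show ?thesis using dC_old[OF j(1)] sC that(2) by metis
    qed
    show "\<exists>k \<in> delivered C' r'. \<exists>nd0. fst (snd (sent C' ! k)) = Ins n nd0 \<and> strip nd1 = strip nd0"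
    proof (cases "r' = r")
      case False
      then show ?thesis using old[of nd1] t tC by simp
    next
      case True
      from trees_cases show ?thesis
      proof
        assume "\<exists>n nd. fst (snd (sent C ! k)) = Ins n nd \<and> trees C' r = T(n \<mapsto> nd)"
        then obtain n0 nd0 where h: "fst (snd (sent C ! k)) = Ins n0 nd0" "trees C' r = T(n0 \<mapsto> nd0)" by blast
        show ?thesis
        proof (cases "n = n0")
          case True
          then have "nd1 = nd0" using t h \<open>r' = r\<close> by simp
          moreover have "k \<in> delivered C' r'" using dC \<open>r' = r\<close> by simp
          moreover have "fst (snd (sent C' ! k)) = Ins n nd0" using h True sC by simp
          ultimately show ?thesis by blast
        next
          case False
          then have "trees C r' n = Some nd1" using t h \<open>r' = r\<close> T_def by simp
          then show ?thesis using old[of nd1] by simp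
        qed
      next
        assume "\<exists>m. fst (snd (sent C ! k)) = Del m \<and> trees C' r = T(m := map_option (\<lambda>nd. nd\<lparr>val := None\<rparr>) (T m))"
        then obtain m where h: "trees C' r = T(m := map_option (\<lambda>nd. nd\<lparr>val := None\<rparr>) (T m))" by blast
        from del_some[of T m n nd1] t h \<open>r' = r\<close> obtain nd2 where "T n = Some nd2" "strip nd1 = strip nd2" by auto
        then show ?thesis using old[of nd2] T_def \<open>r' = r\<close> by simp
      qed
    qed
  qed
  have G5': "\<forall>r k n nd. k \<in> delivered C' r \<longrightarrow> fst (snd (sent C' ! k)) = Ins n nd \<longrightarrow> n \<in> dom (trees C' r)"
  proof (intro allI impI)
    fix r' j n nd1 assume j: "j \<in> delivered C' r'" and m: "fst (snd (sent C' ! j)) = Ins n nd1"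
    have dom_mono: "dom (trees C r') \<subseteq> dom (trees C' r')"
    proof (cases "r' = r")
      case True
      from trees_cases show ?thesis
      proof
        assume "\<exists>n nd. fst (snd (sent C ! k)) = Ins n nd \<and> trees C' r = T(n \<mapsto> nd)"
        then show ?thesis using True T_def by auto
      next
        assume "\<exists>m. fst (snd (sent C ! k)) = Del m \<and> trees C' r = T(m := map_option (\<lambda>nd. nd\<lparr>val := None\<rparr>) (T m))"
        then show ?thesis using True T_def del_dom by (metis order_refl)
      qed
    qed (simp add: tC)
    from dC_new[OF j] show "n \<in> dom (trees C' r')"
    proof
      assume "j \<in> delivered C r'"
      then have "n \<in> dom (trees C r')" using G5 m sC by metis
      then show ?thesis using dom_mono by blast
    next
      assume a: "r' = r \<and> j = k"
      then have "fst (snd (sent C ! k)) = Ins n nd1" using m sC by simp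
      then have "trees C' r = T(n \<mapsto> nd1)" using tC by simp
      then show ?thesis using a by simp
    qed
  qed
  have W': "\<forall>r. \<exists>\<rho>. wft (trees C' r) \<rho>"
  proof
    fix r'
    show "\<exists>\<rho>. wft (trees C' r') \<rho>"
    proof (cases "r' = r")
      case False
      then show ?thesis using inv_W[OF rinv] tC by simp
    next
      case True
      from trees_cases show ?thesis
      proof
        assume "\<exists>n nd. fst (snd (sent C ! k)) = Ins n nd \<and> trees C' r = T(n \<mapsto> nd)"
        then obtain n nd where h: "fst (snd (sent C ! k)) = Ins n nd" "trees C' r = T(n \<mapsto> nd)" by blast
        have g: "good C k nd" using G6 kl h(1) by blast
        have nn: "n \<notin> dom T"
        proof
          assume "n \<in> dom T"
          then obtain ndx where "trees C r n = Some ndx" using T_def by auto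
          from inv_node_msg[OF rinv this] obtain j nd' where j: "j \<in> delivered C r" "j < length (sent C)"
            "fst (snd (sent C ! j)) = Ins n nd'" by blast
          then have "j = k" using G2 kl h(1) by blast
          then show False using j(1) kn by simp
        qed
        have indom: "q \<in> dom T" if "\<exists>j \<in> snd (snd (sent C ! k)). j < length (sent C) \<and> (\<exists>nd'. fst (snd (sent C ! j)) = Ins q nd')" for q
        proof -
          from that obtain j nd' where "j \<in> snd (snd (sent C ! k))" "fst (snd (sent C ! j)) = Ins q nd'" by blast
          then show ?thesis using deps G5 T_def by blast
        qed
        have r1: "parent nd = Root \<longrightarrow> side nd = R" using g unfolding good_def by blast
        have r2: "\<forall>p. parent nd = Nd p \<longrightarrow> p \<in> dom T" using g indom unfolding good_def by blast
        have r3: "\<forall>m. rorig nd = Some m \<longrightarrow> m \<in> dom T" using g indom unfolding good_def by blast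
        from wft_insert[OF w nn r1 r2 r3] show ?thesis using h(2) True by auto
      next
        assume "\<exists>m. fst (snd (sent C ! k)) = Del m \<and> trees C' r = T(m := map_option (\<lambda>nd. nd\<lparr>val := None\<rparr>) (T m))"
        then obtain m where h: "trees C' r = T(m := map_option (\<lambda>nd. nd\<lparr>val := None\<rparr>) (T m))" by blast
        have "wft (trees C' r) \<rho>" using del_wft[OF w, of m] h by simp
        then show ?thesis using True by blast
      qed
    qed
  qed
  show ?thesis unfolding C'_def[symmetric]
  proof (rule inv_intro)
    show "\<forall>r. delivered C' r \<subseteq> {..<length (sent C')}"
    proof
      fix r'
      show "delivered C' r' \<subseteq> {..<length (sent C')}"
        using G1 kl unfolding dC sC by (cases "r' = r") auto
    qed
  next
    show "\<forall>k k' n nd nd'. k < length (sent C') \<longrightarrow> k' < length (sent C') \<longrightarrow>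
        fst (snd (sent C' ! k)) = Ins n nd \<longrightarrow> fst (snd (sent C' ! k')) = Ins n nd' \<longrightarrow> k = k'"
      using G2 unfolding sC .
  next
    show "\<forall>k s c nd. k < length (sent C') \<longrightarrow> fst (snd (sent C' ! k)) = Ins (s, c) nd \<longrightarrow> c < ctr C' s"
      using G3 unfolding sC cC .
  next
    show "\<forall>r n nd. trees C' r n = Some nd \<longrightarrow>
        (\<exists>k \<in> delivered C' r. \<exists>nd0. fst (snd (sent C' ! k)) = Ins n nd0 \<and> strip nd = strip nd0)"
      by (rule G4')
  next
    show "\<forall>r k n nd. k \<in> delivered C' r \<longrightarrow> fst (snd (sent C' ! k)) = Ins n nd \<longrightarrow> n \<in> dom (trees C' r)"
      by (rule G5')
  next
    show "\<forall>k n nd. k < length (sent C') \<longrightarrow> fst (snd (sent C' ! k)) = Ins n nd \<longrightarrow> good C' k nd"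
    proof (intro allI impI)
      fix j n nd assume "j < length (sent C')" "fst (snd (sent C' ! j)) = Ins n nd"
      then have "good C j nd" using G6 sC by metis
      then show "good C' j nd" using good_mono[of C j nd C' "[]"] sC \<open>j < length (sent C')\<close> by simp
    qed
  next
    show "\<forall>r. \<exists>\<rho>. wft (trees C' r) \<rho>" by (rule W')
  qed
qed

lemma reach_inv:
  fixes C :: "'v conf"
  shows "reachable a C \<Longrightarrow> rinv C"
proof (induction rule: reachable.induct)
  case init
  have s: "sent (init_conf :: 'v conf) = []" "delivered (init_conf :: 'v conf) = (\<lambda>_. {})"
    "trees (init_conf :: 'v conf) = (\<lambda>_. Map.empty)" by (simp_all add: init_conf_def)
  have w: "wft (Map.empty :: 'v tree) (\<lambda>_. 0)" by (simp add: wft_def)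
  show ?case
  proof (rule inv_intro)
    show "\<forall>r. \<exists>\<rho>. wft (trees init_conf r) \<rho>"
      by (intro allI exI[of _ "\<lambda>_. 0"]) (simp add: init_conf_def wft_def)
  qed (simp_all add: s)
next
  case (insert C i r x)
  show ?case by (rule inv_insert[OF insert.IH insert.hyps(2)])
next
  case (delete C i r)
  show ?case by (rule inv_delete[OF delete.IH])
next
  case (deliver C k r)
  show ?case by (rule inv_deliver[OF deliver.IH deliver.hyps(2-4)])
qed


theorem lemma4:
  fixes a :: alg and C :: "'v conf" and r :: rid
  assumes "reachable a C"
  shows "(\<forall>D nd. trees C r D = Some nd \<longrightarrow> walk_up (trees C r) D (lorig nd))
       \<and> (\<forall>A B. A \<in> dom (trees C r) \<longrightarrow> B \<in> dom (trees C r) \<longrightarrow> lo_less a (trees C r) A B \<longrightarrow>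
            ((Nd A, Nd B) \<in> (tree_edges (trees C r))\<^sup>+ \<longleftrightarrow> (Nd A, Nd B) \<in> (lo_edges (trees C r))\<^sup>+))"
proof -
  have I: "rinv C" using reach_inv assms by blast
  define T where "T = trees C r"
  obtain \<rho> where w: "wft T \<rho>" using inv_W[OF I] T_def by blast
  have wa: "\<forall>D nd. T D = Some nd \<longrightarrow> walk_up T D (lorig nd)"
    using inv_walk[OF I] T_def by blast
  have b: "\<forall>A B. A \<in> dom T \<longrightarrow> B \<in> dom T \<longrightarrow> lo_less a T A B \<longrightarrow>
            ((Nd A, Nd B) \<in> (tree_edges T)\<^sup>+ \<longleftrightarrow> (Nd A, Nd B) \<in> (lo_edges T)\<^sup>+)"
  proof (intro allI impI iffI)
    fix A B
    assume lt: "lo_less a T A B" and tr: "(Nd A, Nd B) \<in> (tree_edges T)\<^sup>+"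
    from tr obtain y where y: "(Nd A, y) \<in> tree_edges T" "(y, Nd B) \<in> (tree_edges T)\<^sup>*"
      by (blast dest: tranclD)
    then obtain c ndc where c: "y = Nd c" "T c = Some ndc" "parent ndc = Nd A" by (auto simp: edge_iff)
    have Bc: "B \<in> subs T (Nd c)" using y(2) c(1) by (simp add: subs_def)
    show "(Nd A, Nd B) \<in> (lo_edges T)\<^sup>+"
    proof (cases "side ndc")
      case R
      show ?thesis using lo_reach[OF w wa c(2) R c(3) Bc] .
    next
      case L
      from left_before[OF w c(2) L c(3) Bc, of a] obtain U V where
        UV: "list_order a T = U @ A # V" "B \<in> set U" by blast
      from lt obtain i j where ij: "i < j" "j < length (list_order a T)"
        "list_order a T ! i = A" "list_order a T ! j = B" unfolding lo_less_def by blast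
      have d: "distinct (U @ A # V)" using list_order_props(2)[OF w, of a] UV(1) by simp
      show ?thesis using order_contra[OF d, of i j B] ij UV by simp
    qed
  next
    fix A B
    assume "(Nd A, Nd B) \<in> (lo_edges T)\<^sup>+"
    then show "(Nd A, Nd B) \<in> (tree_edges T)\<^sup>+" by (rule lo_sub_tree[OF wa])
  qed
  show ?thesis using wa b unfolding T_def by blast
qed

end
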